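(* Let $x\in\mathbb{R}^d$ be any vector, $M\in\mathbb{R}^{n\times n}$ any matrix, and $A$ a random $n\times d$ matrix with i.i.d.\ $N(0,1)$ entries. For any $\eta\in(0,1/2)$, $$\Pr\Big( \|A^\top M A x\|_2 \le \|M\|_F\cdot\|x\|_2\cdot\sqrt{\tfrac{(d-1)\pi}{8n}}\cdot \eta^{1+1/(d-1)}\Big) \;\le\; 2\eta .$$
   Context: $\|\cdot\|_F$ denotes the Frobenius norm and $\pi = 3.14159\ldots$. *)

theory Defs
  imports "HOL-Probability.Probability"
begin

text \<open>Matrices are functions on index pairs, vectors functions on indices (0-based).\<close>

definition gaussian_matrix :: "nat \<Rightarrow> nat \<Rightarrow> (nat \<times> nat \<Rightarrow> real) measure" where
  "gaussian_matrix n d = PiM ({..<n} \<times> {..<d}) (\<lambda>_. std_normal_distribution)"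

definition vec_norm :: "nat \<Rightarrow> (nat \<Rightarrow> real) \<Rightarrow> real" where
  "vec_norm d x = sqrt (\<Sum>j<d. (x j)\<^sup>2)"

definition frob_norm :: "nat \<Rightarrow> (nat \<Rightarrow> nat \<Rightarrow> real) \<Rightarrow> real" where
  "frob_norm n M = sqrt (\<Sum>i<n. \<Sum>j<n. (M i j)\<^sup>2)"

definition AtMAx :: "nat \<Rightarrow> nat \<Rightarrow> (nat \<times> nat \<Rightarrow> real) \<Rightarrow> (nat \<Rightarrow> nat \<Rightarrow> real)
    \<Rightarrow> (nat \<Rightarrow> real) \<Rightarrow> nat \<Rightarrow> real" where
  "AtMAx n d A M x = (\<lambda>k. \<Sum>i<n. \<Sum>l<n. A (i, k) * M i l * (\<Sum>j<d. A (l, j) * x j))"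

end

theory Submission
  imports Defs
begin
lemma shear1:
  fixes g :: "real \<times> real \<Rightarrow> ennreal"
  assumes g[measurable]: "g \<in> borel_measurable (lborel \<Otimes>\<^sub>M lborel)"
  shows "(\<integral>\<^sup>+z. g (fst z + a * snd z, snd z) \<partial>(lborel \<Otimes>\<^sub>M lborel)) = (\<integral>\<^sup>+z. g z \<partial>(lborel \<Otimes>\<^sub>M lborel))"
proof -
  have pf: "pair_sigma_finite lborel lborel" by unfold_locales
  have "(\<integral>\<^sup>+z. g (fst z + a * snd z, snd z) \<partial>(lborel \<Otimes>\<^sub>M lborel))
      = (\<integral>\<^sup>+y. (\<integral>\<^sup>+x. g (x + a * y, y) \<partial>lborel) \<partial>lborel)"
    by (subst pair_sigma_finite.nn_integral_snd[OF pf, symmetric]) (auto simp: measurable_pair_iff)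
  also have "\<dots> = (\<integral>\<^sup>+y. (\<integral>\<^sup>+x. g (x, y) \<partial>lborel) \<partial>lborel)"
  proof (rule nn_integral_cong)
    fix y :: real
    have "(\<integral>\<^sup>+x. g (x, y) \<partial>lborel) = ennreal \<bar>1\<bar> * (\<integral>\<^sup>+x. g (a*y + 1 * x, y) \<partial>lborel)"
      by (rule nn_integral_real_affine) auto
    then show "(\<integral>\<^sup>+x. g (x + a * y, y) \<partial>lborel) = (\<integral>\<^sup>+x. g (x, y) \<partial>lborel)"
      by (simp add: add.commute)
  qed
  also have "\<dots> = (\<integral>\<^sup>+z. g z \<partial>(lborel \<Otimes>\<^sub>M lborel))"
    by (subst pair_sigma_finite.nn_integral_snd[OF pf, symmetric]) auto
  finally show ?thesis .
qed

lemma shear2: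
  fixes g :: "real \<times> real \<Rightarrow> ennreal"
  assumes g[measurable]: "g \<in> borel_measurable (lborel \<Otimes>\<^sub>M lborel)"
  shows "(\<integral>\<^sup>+z. g (fst z, snd z + b * fst z) \<partial>(lborel \<Otimes>\<^sub>M lborel)) = (\<integral>\<^sup>+z. g z \<partial>(lborel \<Otimes>\<^sub>M lborel))"
proof -
  have pf: "pair_sigma_finite lborel lborel" by unfold_locales
  have "(\<integral>\<^sup>+z. g (fst z, snd z + b * fst z) \<partial>(lborel \<Otimes>\<^sub>M lborel))
      = (\<integral>\<^sup>+x. (\<integral>\<^sup>+y. g (x, y + b * x) \<partial>lborel) \<partial>lborel)"
    by (subst lborel.nn_integral_fst[symmetric]) (auto simp: measurable_pair_iff)
  also have "\<dots> = (\<integral>\<^sup>+x. (\<integral>\<^sup>+y. g (x, y) \<partial>lborel) \<partial>lborel)"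
  proof (rule nn_integral_cong)
    fix x :: real
    have "(\<integral>\<^sup>+y. g (x, y) \<partial>lborel) = ennreal \<bar>1\<bar> * (\<integral>\<^sup>+y. g (x, b*x + 1 * y) \<partial>lborel)"
      by (rule nn_integral_real_affine) auto
    then show "(\<integral>\<^sup>+y. g (x, y + b * x) \<partial>lborel) = (\<integral>\<^sup>+y. g (x, y) \<partial>lborel)"
      by (simp add: add.commute)
  qed
  also have "\<dots> = (\<integral>\<^sup>+z. g z \<partial>(lborel \<Otimes>\<^sub>M lborel))"
    by (subst lborel.nn_integral_fst[symmetric]) auto
  finally show ?thesis .
qed

definition rot2 :: "real \<Rightarrow> real \<Rightarrow> real \<times> real \<Rightarrow> real \<times> real" where
  "rot2 c s z = (c * fst z - s * snd z, s * fst z + c * snd z)"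

lemma rot2_measurable[measurable]: "rot2 c s \<in> (lborel \<Otimes>\<^sub>M lborel) \<rightarrow>\<^sub>M (lborel \<Otimes>\<^sub>M lborel)"
  unfolding rot2_def by measurable

lemma rot2_lborel:
  fixes g :: "real \<times> real \<Rightarrow> ennreal"
  assumes g[measurable]: "g \<in> borel_measurable (lborel \<Otimes>\<^sub>M lborel)"
    and cs: "c\<^sup>2 + s\<^sup>2 = 1" and c: "c \<noteq> -1"
  shows "(\<integral>\<^sup>+z. g (rot2 c s z) \<partial>(lborel \<Otimes>\<^sub>M lborel)) = (\<integral>\<^sup>+z. g z \<partial>(lborel \<Otimes>\<^sub>M lborel))"
proof -
  define t where "t = s / (1 + c)"
  have c1: "1 + c \<noteq> 0" using c by auto
  have ts: "t * s = 1 - c"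
  proof -
    have "s * s = (1 - c) * (1 + c)" using cs by (simp add: power2_eq_square algebra_simps)
    then show ?thesis unfolding t_def using c1 by (simp add: field_simps)
  qed
  define h1 where "h1 = (\<lambda>z::real\<times>real. (fst z + (-t) * snd z, snd z))"
  define h2 where "h2 = (\<lambda>z::real\<times>real. (fst z, snd z + s * fst z))"
  have rot: "rot2 c s z = h1 (h2 (h1 z))" for z
  proof -
    have e1: "fst z - t * snd z - t * (snd z + s * (fst z - t * snd z)) = c * fst z - s * snd z"
    proof -
      have "fst z - t * snd z - t * (snd z + s * (fst z - t * snd z))
          = (1 - t * s) * fst z - t * (2 - t * s) * snd z" by (simp add: algebra_simps)
      also have "\<dots> = c * fst z - (t * (1 + c)) * snd z"
      proof -
        have a: "1 - t * s = c" "2 - t * s = 1 + c" using ts by auto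
        show ?thesis by (simp only: a)
      qed
      also have "t * (1 + c) = s" unfolding t_def using c1 by simp
      finally show ?thesis .
    qed
    have e2: "snd z + s * (fst z - t * snd z) = s * fst z + c * snd z"
    proof -
      have "snd z + s * (fst z - t * snd z) = s * fst z + (1 - t * s) * snd z" by (simp add: algebra_simps)
      then show ?thesis using ts by simp
    qed
    show ?thesis unfolding rot2_def h1_def h2_def using e1 e2 by simp
  qed
  have m1[measurable]: "h1 \<in> (lborel \<Otimes>\<^sub>M lborel) \<rightarrow>\<^sub>M (lborel \<Otimes>\<^sub>M lborel)" unfolding h1_def by measurable
  have m2[measurable]: "h2 \<in> (lborel \<Otimes>\<^sub>M lborel) \<rightarrow>\<^sub>M (lborel \<Otimes>\<^sub>M lborel)" unfolding h2_def by measurable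
  have "(\<integral>\<^sup>+z. g (rot2 c s z) \<partial>(lborel \<Otimes>\<^sub>M lborel)) = (\<integral>\<^sup>+z. (g \<circ> h1 \<circ> h2) (h1 z) \<partial>(lborel \<Otimes>\<^sub>M lborel))"
    by (simp add: rot)
  also have "\<dots> = (\<integral>\<^sup>+z. (g \<circ> h1 \<circ> h2) z \<partial>(lborel \<Otimes>\<^sub>M lborel))"
    unfolding h1_def by (rule shear1) measurable
  also have "\<dots> = (\<integral>\<^sup>+z. (g \<circ> h1) (h2 z) \<partial>(lborel \<Otimes>\<^sub>M lborel))" by simp
  also have "\<dots> = (\<integral>\<^sup>+z. (g \<circ> h1) z \<partial>(lborel \<Otimes>\<^sub>M lborel))"
    unfolding h2_def by (rule shear2) measurable
  also have "\<dots> = (\<integral>\<^sup>+z. g z \<partial>(lborel \<Otimes>\<^sub>M lborel))"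
    unfolding h1_def comp_def by (rule shear1) measurable
  finally show ?thesis .
qed

abbreviation NN :: "real measure" where "NN \<equiv> std_normal_distribution"

lemma probNN: "prob_space NN" by (rule prob_space_normal_density) simp

lemma sets_NN[simp, measurable_cong]: "sets NN = sets borel" by simp

lemma NN_pair: "NN \<Otimes>\<^sub>M NN = density (lborel \<Otimes>\<^sub>M lborel)
     (\<lambda>(x,y). ennreal (std_normal_density x) * ennreal (std_normal_density y))"
proof (rule pair_measure_density)
  show "sigma_finite_measure lborel" by unfold_locales
  show "sigma_finite_measure NN" using probNN by (simp add: prob_space_imp_sigma_finite)
qed auto

lemma phi2_rot: assumes cs: "c\<^sup>2 + s\<^sup>2 = 1"
  shows "std_normal_density (c * x - s * y) * std_normal_density (s * x + c * y)
       = std_normal_density x * std_normal_density y"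
proof -
  have sq: "(c * x - s * y)\<^sup>2 + (s * x + c * y)\<^sup>2 = x\<^sup>2 + y\<^sup>2"
  proof -
    have "(c * x - s * y)\<^sup>2 + (s * x + c * y)\<^sup>2 = (c\<^sup>2 + s\<^sup>2) * (x\<^sup>2 + y\<^sup>2)"
      by (simp add: power2_eq_square algebra_simps)
    then show ?thesis using cs by simp
  qed
  have "std_normal_density a * std_normal_density b = (1 / sqrt (2 * pi))^2 * exp (- (a\<^sup>2 + b\<^sup>2) / 2)" for a b
    unfolding std_normal_density_def by (simp add: power2_eq_square exp_add[symmetric] field_simps)
  then show ?thesis using sq by simp
qed

lemma rot2_NN:
  fixes h :: "real \<times> real \<Rightarrow> ennreal"
  assumes h[measurable]: "h \<in> borel_measurable (lborel \<Otimes>\<^sub>M lborel)"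
    and cs: "c\<^sup>2 + s\<^sup>2 = 1" and c: "c \<noteq> -1"
  shows "(\<integral>\<^sup>+z. h (rot2 c s z) \<partial>(NN \<Otimes>\<^sub>M NN)) = (\<integral>\<^sup>+z. h z \<partial>(NN \<Otimes>\<^sub>M NN))"
proof -
  define g where "g = (\<lambda>z::real\<times>real. ennreal (std_normal_density (fst z)) * ennreal (std_normal_density (snd z)) * h z)"
  have gm[measurable]: "g \<in> borel_measurable (lborel \<Otimes>\<^sub>M lborel)" unfolding g_def by measurable
  have eq: "(\<integral>\<^sup>+z. f z \<partial>(NN \<Otimes>\<^sub>M NN)) = (\<integral>\<^sup>+z. ennreal (std_normal_density (fst z)) * ennreal (std_normal_density (snd z)) * f z \<partial>(lborel \<Otimes>\<^sub>M lborel))"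
    if [measurable]: "f \<in> borel_measurable (lborel \<Otimes>\<^sub>M lborel)" for f
    unfolding NN_pair by (subst nn_integral_density) (auto simp: case_prod_beta intro!: nn_integral_cong)
  have "(\<integral>\<^sup>+z. h (rot2 c s z) \<partial>(NN \<Otimes>\<^sub>M NN)) = (\<integral>\<^sup>+z. g (rot2 c s z) \<partial>(lborel \<Otimes>\<^sub>M lborel))"
    apply (subst eq)
     apply measurable
    apply (rule nn_integral_cong)
    using phi2_rot[OF cs] unfolding g_def rot2_def
    by (simp add: ennreal_mult'[symmetric] mult.assoc)
  also have "\<dots> = (\<integral>\<^sup>+z. g z \<partial>(lborel \<Otimes>\<^sub>M lborel))"
    by (rule rot2_lborel[OF gm cs c])
  also have "\<dots> = (\<integral>\<^sup>+z. h z \<partial>(NN \<Otimes>\<^sub>M NN))"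
    unfolding g_def by (subst eq) auto
  finally show ?thesis .
qed

abbreviation GM :: "'i set \<Rightarrow> ('i \<Rightarrow> real) measure" where
  "GM K \<equiv> PiM K (\<lambda>_. NN)"

lemma PS: "product_sigma_finite (\<lambda>_::'i. NN)"
  unfolding product_sigma_finite_def using probNN prob_space_imp_sigma_finite by blast

lemma sets_NN_pair: "sets (NN \<Otimes>\<^sub>M NN) = sets (lborel \<Otimes>\<^sub>M lborel)"
  by (rule sets_pair_measure_cong) simp_all

definition cg :: "'i \<Rightarrow> 'i \<Rightarrow> real \<Rightarrow> real \<Rightarrow> ('i \<Rightarrow> real) \<Rightarrow> ('i \<Rightarrow> real)" where
  "cg a b c s f = f(a := c * f a - s * f b, b := s * f a + c * f b)"

lemma cg_measurable[measurable]:
  assumes "a \<in> K" "b \<in> K"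
  shows "cg a b c s \<in> GM K \<rightarrow>\<^sub>M GM K"
proof -
  have "(\<lambda>f. (\<lambda>i. cg a b c s f i)) \<in> GM K \<rightarrow>\<^sub>M GM K"
  proof (rule measurable_PiM_single')
    fix i assume "i \<in> K"
    show "(\<lambda>f. cg a b c s f i) \<in> GM K \<rightarrow>\<^sub>M NN"
      unfolding cg_def using assms \<open>i \<in> K\<close> by (cases "i = b"; cases "i = a") (auto simp: fun_upd_def)
  next
    show "(\<lambda>f. \<lambda>i. cg a b c s f i) \<in> space (GM K) \<rightarrow> (\<Pi>\<^sub>E i\<in>K. space NN)"
      using assms by (auto simp: cg_def space_PiM PiE_def extensional_def)
  qed
  then show ?thesis by simp
qed

definition mk2 :: "'i \<Rightarrow> 'i \<Rightarrow> real \<times> real \<Rightarrow> ('i \<Rightarrow> real)" where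
  "mk2 a b z = (\<lambda>i. if i = a then fst z else if i = b then snd z else undefined)"

lemma mk2_measurable[measurable]: "mk2 a b \<in> (lborel \<Otimes>\<^sub>M lborel) \<rightarrow>\<^sub>M GM {a, b}"
proof -
  have "(\<lambda>z. (\<lambda>i. mk2 a b z i)) \<in> (lborel \<Otimes>\<^sub>M lborel) \<rightarrow>\<^sub>M GM {a,b}"
  proof (rule measurable_PiM_single')
    fix i assume "i \<in> {a,b}"
    show "(\<lambda>z. mk2 a b z i) \<in> (lborel \<Otimes>\<^sub>M lborel) \<rightarrow>\<^sub>M NN"
      using \<open>i \<in> {a,b}\<close> unfolding mk2_def by (cases "i = a") (simp, measurable)+
  next
    show "(\<lambda>z. \<lambda>i. mk2 a b z i) \<in> space (lborel \<Otimes>\<^sub>M lborel) \<rightarrow> (\<Pi>\<^sub>E i\<in>{a,b}. space NN)"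
      by (auto simp: mk2_def PiE_def extensional_def)
  qed
  then show ?thesis by simp
qed

lemma cg_pair:
  fixes H :: "('i \<Rightarrow> real) \<Rightarrow> ennreal"
  assumes H[measurable]: "H \<in> borel_measurable (GM {a, b})" and ab: "a \<noteq> b"
    and cs: "c\<^sup>2 + s\<^sup>2 = 1" and c: "c \<noteq> -1"
  shows "(\<integral>\<^sup>+y. H (cg a b c s y) \<partial>GM {a,b}) = (\<integral>\<^sup>+y. H y \<partial>GM {a,b})"
proof -
  interpret P: product_sigma_finite "\<lambda>_::'i. NN" by (rule PS)
  have yeq: "y = mk2 a b (y a, y b)" if "y \<in> space (GM {a,b})" for y
    using that ab by (auto simp: mk2_def space_PiM PiE_def extensional_def)
  have cgeq: "cg a b c s (mk2 a b z) = mk2 a b (rot2 c s z)" for z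
    using ab by (auto simp: cg_def mk2_def rot2_def)
  have hm: "(\<lambda>z. H (mk2 a b z)) \<in> borel_measurable (lborel \<Otimes>\<^sub>M lborel)" by measurable
  have hm2: "case_prod (\<lambda>u v. H (mk2 a b (u, v))) \<in> borel_measurable (NN \<Otimes>\<^sub>M NN)"
    using hm by (simp add: measurable_cong_sets[OF sets_NN_pair refl] case_prod_beta')
  have hm3: "case_prod (\<lambda>u v. H (mk2 a b (rot2 c s (u, v)))) \<in> borel_measurable (NN \<Otimes>\<^sub>M NN)"
    using hm by (simp add: measurable_cong_sets[OF sets_NN_pair refl] case_prod_beta')
  have "(\<integral>\<^sup>+y. H (cg a b c s y) \<partial>GM {a,b}) = (\<integral>\<^sup>+y. H (mk2 a b (rot2 c s (y a, y b))) \<partial>GM {a,b})"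
  proof (rule nn_integral_cong)
    fix y assume "y \<in> space (GM {a,b})"
    have e: "mk2 a b (y a, y b) = y" using yeq[OF \<open>y \<in> space (GM {a,b})\<close>] by (rule sym)
    have "cg a b c s y = mk2 a b (rot2 c s (y a, y b))"
      using cgeq[of "(y a, y b)"] unfolding e .
    then show "H (cg a b c s y) = H (mk2 a b (rot2 c s (y a, y b)))" by simp
  qed
  also have "\<dots> = (\<integral>\<^sup>+z. H (mk2 a b (rot2 c s (fst z, snd z))) \<partial>(NN \<Otimes>\<^sub>M NN))"
    using P.product_nn_integral_pair[OF hm3 ab] by (simp only:)
  also have "\<dots> = (\<integral>\<^sup>+z. H (mk2 a b (rot2 c s z)) \<partial>(NN \<Otimes>\<^sub>M NN))"
    by (simp only: prod.collapse)
  also have "\<dots> = (\<integral>\<^sup>+z. H (mk2 a b z) \<partial>(NN \<Otimes>\<^sub>M NN))"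
    using rot2_NN[OF hm cs c] by (simp only: o_def)
  also have "\<dots> = (\<integral>\<^sup>+z. H (mk2 a b (fst z, snd z)) \<partial>(NN \<Otimes>\<^sub>M NN))"
    by (simp only: prod.collapse)
  also have "\<dots> = (\<integral>\<^sup>+y. H (mk2 a b (y a, y b)) \<partial>GM {a,b})"
    using P.product_nn_integral_pair[OF hm2 ab] by (simp only:)
  also have "\<dots> = (\<integral>\<^sup>+y. H y \<partial>GM {a,b})"
  proof (rule nn_integral_cong)
    fix y assume "y \<in> space (GM {a,b})"
    from yeq[OF this] show "H (mk2 a b (y a, y b)) = H y" by (rule arg_cong[where f=H, OF sym])
  qed
  finally show ?thesis .
qed

lemma cg_merge:
  assumes "a \<notin> R" "b \<notin> R" "a \<noteq> b"
  shows "cg a b c s (merge R {a,b} (x, y)) = merge R {a,b} (x, cg a b c s y)"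
  using assms by (auto simp: cg_def merge_def fun_eq_iff)

lemma cg_GM:
  fixes h :: "('i \<Rightarrow> real) \<Rightarrow> ennreal"
  assumes K: "finite K" "a \<in> K" "b \<in> K" "a \<noteq> b"
    and h[measurable]: "h \<in> borel_measurable (GM K)"
    and cs: "c\<^sup>2 + s\<^sup>2 = 1" and c: "c \<noteq> -1"
  shows "(\<integral>\<^sup>+f. h (cg a b c s f) \<partial>GM K) = (\<integral>\<^sup>+f. h f \<partial>GM K)"
proof -
  interpret P: product_sigma_finite "\<lambda>_::'i. NN" by (rule PS)
  define R where "R = K - {a, b}"
  have KR: "K = R \<union> {a,b}" using K unfolding R_def by auto
  have disj: "R \<inter> {a,b} = {}" "finite R" "finite {a,b}" unfolding R_def using K by auto
  have aR: "a \<notin> R" "b \<notin> R" unfolding R_def by auto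
  have hK: "h \<in> borel_measurable (GM (R \<union> {a,b}))" using h KR by simp
  have "(\<lambda>f. h (cg a b c s f)) \<in> borel_measurable (GM K)"
    using measurable_comp[OF cg_measurable[OF \<open>a \<in> K\<close> \<open>b \<in> K\<close>] h] by (simp add: comp_def)
  then have hcK: "(\<lambda>f. h (cg a b c s f)) \<in> borel_measurable (GM (R \<union> {a,b}))"
    using KR by simp
  have inner: "(\<integral>\<^sup>+y. h (merge R {a,b} (x, cg a b c s y)) \<partial>GM {a,b}) = (\<integral>\<^sup>+y. h (merge R {a,b} (x, y)) \<partial>GM {a,b})"
    if x: "x \<in> space (GM R)" for x
  proof (rule cg_pair[where H = "\<lambda>y. h (merge R {a,b} (x, y))", OF _ \<open>a \<noteq> b\<close> cs c])
    show "(\<lambda>y. h (merge R {a, b} (x, y))) \<in> borel_measurable (GM {a, b})"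
      using hK x by measurable
  qed
  have "(\<integral>\<^sup>+f. h (cg a b c s f) \<partial>GM K) = (\<integral>\<^sup>+f. h (cg a b c s f) \<partial>GM (R \<union> {a,b}))"
    using KR by simp
  also have "\<dots> = (\<integral>\<^sup>+x. (\<integral>\<^sup>+y. h (cg a b c s (merge R {a,b} (x, y))) \<partial>GM {a,b}) \<partial>GM R)"
    by (rule P.product_nn_integral_fold[OF disj hcK])
  also have "\<dots> = (\<integral>\<^sup>+x. (\<integral>\<^sup>+y. h (merge R {a,b} (x, y)) \<partial>GM {a,b}) \<partial>GM R)"
    by (rule nn_integral_cong) (simp add: cg_merge[OF aR \<open>a \<noteq> b\<close>] inner)
  also have "\<dots> = (\<integral>\<^sup>+f. h f \<partial>GM (R \<union> {a,b}))"
    by (rule P.product_nn_integral_fold[OF disj hK, symmetric])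
  also have "\<dots> = (\<integral>\<^sup>+f. h f \<partial>GM K)" using KR by simp
  finally show ?thesis .
qed

lemma comp_meas[measurable]: "(\<lambda>A. A \<kappa>) \<in> borel_measurable (GM K)"
proof (cases "\<kappa> \<in> K")
  case True
  have "(\<lambda>A. A \<kappa>) \<in> GM K \<rightarrow>\<^sub>M NN" by (rule measurable_component_singleton[OF True])
  then show ?thesis by (simp add: measurable_cong_sets[OF refl sets_NN])
next
  case False
  have "(\<lambda>A. undefined) \<in> borel_measurable (GM K)" by simp
  then show ?thesis
    by (rule measurable_cong[THEN iffD1, rotated]) (use False in \<open>auto simp: space_PiM PiE_def extensional_def\<close>)
qed

definition Lg :: "'a \<Rightarrow> 'a \<Rightarrow> real \<Rightarrow> real \<Rightarrow> 'b set \<Rightarrow> ('a \<times> 'b \<Rightarrow> real) \<Rightarrow> ('a \<times> 'b \<Rightarrow> real)" where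
  "Lg p q c s R A = (\<lambda>(i,k). if k \<in> R \<and> i = p then c * A (p,k) - s * A (q,k)
      else if k \<in> R \<and> i = q then s * A (p,k) + c * A (q,k) else A (i,k))"

definition Rg :: "'b \<Rightarrow> 'b \<Rightarrow> real \<Rightarrow> real \<Rightarrow> 'a set \<Rightarrow> ('a \<times> 'b \<Rightarrow> real) \<Rightarrow> ('a \<times> 'b \<Rightarrow> real)" where
  "Rg p q c s R A = (\<lambda>(i,k). if i \<in> R \<and> k = p then c * A (i,p) - s * A (i,q)
      else if i \<in> R \<and> k = q then s * A (i,p) + c * A (i,q) else A (i,k))"

lemma Lg_insert: "k \<notin> R \<Longrightarrow> p \<noteq> q \<Longrightarrow> Lg p q c s (insert k R) A = cg (p,k) (q,k) c s (Lg p q c s R A)"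
  by (auto simp: Lg_def cg_def fun_eq_iff)

lemma Rg_insert: "i \<notin> R \<Longrightarrow> p \<noteq> q \<Longrightarrow> Rg p q c s (insert i R) A = cg (i,p) (i,q) c s (Rg p q c s R A)"
  by (auto simp: Rg_def cg_def fun_eq_iff)

lemma Lg_empty: "Lg p q c s {} A = A" by (auto simp: Lg_def fun_eq_iff)
lemma Rg_empty: "Rg p q c s {} A = A" by (auto simp: Rg_def fun_eq_iff)

lemma Lg_GM:
  fixes h :: "('a \<times> 'b \<Rightarrow> real) \<Rightarrow> ennreal"
  assumes fin: "finite I" "finite J" and pq: "p \<in> I" "q \<in> I" "p \<noteq> q"
    and cs: "c\<^sup>2 + s\<^sup>2 = 1" and c: "c \<noteq> -1"
    and R: "finite R" "R \<subseteq> J"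
    and h: "h \<in> borel_measurable (GM (I \<times> J))"
  shows "(\<integral>\<^sup>+A. h (Lg p q c s R A) \<partial>GM (I \<times> J)) = (\<integral>\<^sup>+A. h A \<partial>GM (I \<times> J))"
  using R h
proof (induction R arbitrary: h rule: finite_induct)
  case empty
  then show ?case by (simp add: Lg_empty)
next
  case (insert k R)
  have kJ: "(p,k) \<in> I \<times> J" "(q,k) \<in> I \<times> J" using insert pq by auto
  have hm: "(\<lambda>B. h (cg (p,k) (q,k) c s B)) \<in> borel_measurable (GM (I \<times> J))"
    using measurable_comp[OF cg_measurable[OF kJ] insert.prems(2)] by (simp add: comp_def)
  have "(\<integral>\<^sup>+A. h (Lg p q c s (insert k R) A) \<partial>GM (I \<times> J)) = (\<integral>\<^sup>+A. h (cg (p,k) (q,k) c s (Lg p q c s R A)) \<partial>GM (I \<times> J))"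
    using insert pq by (simp add: Lg_insert)
  also have "\<dots> = (\<integral>\<^sup>+A. h (cg (p,k) (q,k) c s A) \<partial>GM (I \<times> J))"
    using insert.IH[OF _ hm] insert.prems by simp
  also have "\<dots> = (\<integral>\<^sup>+A. h A \<partial>GM (I \<times> J))"
    using cg_GM[OF _ kJ _ insert.prems(2) cs c] fin pq by simp
  finally show ?case .
qed

lemma Rg_GM:
  fixes h :: "('a \<times> 'b \<Rightarrow> real) \<Rightarrow> ennreal"
  assumes fin: "finite I" "finite J" and pq: "p \<in> J" "q \<in> J" "p \<noteq> q"
    and cs: "c\<^sup>2 + s\<^sup>2 = 1" and c: "c \<noteq> -1"
    and R: "finite R" "R \<subseteq> I"
    and h: "h \<in> borel_measurable (GM (I \<times> J))"
  shows "(\<integral>\<^sup>+A. h (Rg p q c s R A) \<partial>GM (I \<times> J)) = (\<integral>\<^sup>+A. h A \<partial>GM (I \<times> J))"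
  using R h
proof (induction R arbitrary: h rule: finite_induct)
  case empty
  then show ?case by (simp add: Rg_empty)
next
  case (insert i R)
  have kJ: "(i,p) \<in> I \<times> J" "(i,q) \<in> I \<times> J" using insert pq by auto
  have hm: "(\<lambda>B. h (cg (i,p) (i,q) c s B)) \<in> borel_measurable (GM (I \<times> J))"
    using measurable_comp[OF cg_measurable[OF kJ] insert.prems(2)] by (simp add: comp_def)
  have "(\<integral>\<^sup>+A. h (Rg p q c s (insert i R) A) \<partial>GM (I \<times> J)) = (\<integral>\<^sup>+A. h (cg (i,p) (i,q) c s (Rg p q c s R A)) \<partial>GM (I \<times> J))"
    using insert pq by (simp add: Rg_insert)
  also have "\<dots> = (\<integral>\<^sup>+A. h (cg (i,p) (i,q) c s A) \<partial>GM (I \<times> J))"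
    using insert.IH[OF _ hm] insert.prems by simp
  also have "\<dots> = (\<integral>\<^sup>+A. h A \<partial>GM (I \<times> J))"
    using cg_GM[OF _ kJ _ insert.prems(2) cs c] fin pq by simp
  finally show ?case .
qed

lemma ev_transfer:
  fixes \<Phi> :: "('i \<Rightarrow> real) \<Rightarrow> ('i \<Rightarrow> real)"
  assumes inv: "\<And>h. h \<in> borel_measurable (GM K) \<Longrightarrow> (\<integral>\<^sup>+A. h (\<Phi> A) \<partial>GM K) = (\<integral>\<^sup>+A. h A \<partial>GM K)"
    and S: "{A \<in> space (GM K). Q A} \<in> sets (GM K)"
    and \<Phi>m: "\<Phi> \<in> GM K \<rightarrow>\<^sub>M GM K"
  shows "emeasure (GM K) {A \<in> space (GM K). Q (\<Phi> A)} = emeasure (GM K) {A \<in> space (GM K). Q A}"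
proof -
  let ?S = "{A \<in> space (GM K). Q A}"
  have "emeasure (GM K) {A \<in> space (GM K). Q (\<Phi> A)} = (\<integral>\<^sup>+A. indicator ?S (\<Phi> A) \<partial>GM K)"
  proof -
    have "emeasure (GM K) {A \<in> space (GM K). Q (\<Phi> A)} = (\<integral>\<^sup>+A. indicator {A \<in> space (GM K). Q (\<Phi> A)} A \<partial>GM K)"
    proof (rule nn_integral_indicator[symmetric])
      have "{A \<in> space (GM K). Q (\<Phi> A)} = \<Phi> -` ?S \<inter> space (GM K)"
        using measurable_space[OF \<Phi>m] by auto
      then show "{A \<in> space (GM K). Q (\<Phi> A)} \<in> sets (GM K)"
        using measurable_sets[OF \<Phi>m S] by simp
    qed
    also have "\<dots> = (\<integral>\<^sup>+A. indicator ?S (\<Phi> A) \<partial>GM K)"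
      by (rule nn_integral_cong) (auto simp: indicator_def measurable_space[OF \<Phi>m])
    finally show ?thesis .
  qed
  also have "\<dots> = (\<integral>\<^sup>+A. indicator ?S A \<partial>GM K)"
    by (rule inv) (use S in measurable)
  also have "\<dots> = emeasure (GM K) ?S" using S by simp
  finally show ?thesis .
qed

lemma Lg_meas:
  assumes "p \<in> I" "q \<in> I" "R \<subseteq> J"
  shows "Lg p q c s R \<in> GM (I \<times> J) \<rightarrow>\<^sub>M GM (I \<times> J)"
proof -
  have "(\<lambda>A. (\<lambda>\<kappa>. Lg p q c s R A \<kappa>)) \<in> GM (I \<times> J) \<rightarrow>\<^sub>M GM (I \<times> J)"
  proof (rule measurable_PiM_single')
    fix \<kappa> assume "\<kappa> \<in> I \<times> J"
    show "(\<lambda>A. Lg p q c s R A \<kappa>) \<in> GM (I \<times> J) \<rightarrow>\<^sub>M NN"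
      unfolding measurable_cong_sets[OF refl sets_NN] Lg_def by (cases \<kappa>) simp
  next
    show "(\<lambda>A. \<lambda>\<kappa>. Lg p q c s R A \<kappa>) \<in> space (GM (I \<times> J)) \<rightarrow> (\<Pi>\<^sub>E i\<in>I \<times> J. space NN)"
      using assms by (auto simp: Lg_def space_PiM PiE_def extensional_def)
  qed
  then show ?thesis by simp
qed

lemma Rg_meas:
  assumes "p \<in> J" "q \<in> J" "R \<subseteq> I"
  shows "Rg p q c s R \<in> GM (I \<times> J) \<rightarrow>\<^sub>M GM (I \<times> J)"
proof -
  have "(\<lambda>A. (\<lambda>\<kappa>. Rg p q c s R A \<kappa>)) \<in> GM (I \<times> J) \<rightarrow>\<^sub>M GM (I \<times> J)"
  proof (rule measurable_PiM_single')
    fix \<kappa> assume "\<kappa> \<in> I \<times> J"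
    show "(\<lambda>A. Rg p q c s R A \<kappa>) \<in> GM (I \<times> J) \<rightarrow>\<^sub>M NN"
      unfolding measurable_cong_sets[OF refl sets_NN] Rg_def by (cases \<kappa>) simp
  next
    show "(\<lambda>A. \<lambda>\<kappa>. Rg p q c s R A \<kappa>) \<in> space (GM (I \<times> J)) \<rightarrow> (\<Pi>\<^sub>E i\<in>I \<times> J. space NN)"
      using assms by (auto simp: Rg_def space_PiM PiE_def extensional_def)
  qed
  then show ?thesis by simp
qed

definition gvec :: "nat \<Rightarrow> nat \<Rightarrow> real \<Rightarrow> real \<Rightarrow> (nat \<Rightarrow> real) \<Rightarrow> (nat \<Rightarrow> real)" where
  "gvec p q c s m = m(p := c * m p + s * m q, q := - s * m p + c * m q)"

lemma sum_two:
  assumes "finite I" "p \<in> I" "q \<in> I" "p \<noteq> q"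
  shows "(\<Sum>i\<in>I. f i) = f p + f q + (\<Sum>i\<in>I - {p, q}. f i)"
proof -
  have "(\<Sum>i\<in>I. f i) = f p + (\<Sum>i\<in>I - {p}. f i)" using assms by (simp add: sum.remove)
  also have "(\<Sum>i\<in>I - {p}. f i) = f q + (\<Sum>i\<in>I - {p} - {q}. f i)"
    using assms by (intro sum.remove) auto
  also have "I - {p} - {q} = I - {p, q}" by auto
  finally show ?thesis by (simp add: add.assoc)
qed

lemma rot_sq: fixes c s a b :: real shows "c\<^sup>2 + s\<^sup>2 = 1 \<Longrightarrow> (c * a - s * b)\<^sup>2 + (s * a + c * b)\<^sup>2 = a\<^sup>2 + b\<^sup>2"
proof -
  assume cs: "c\<^sup>2 + s\<^sup>2 = 1"
  have "(c * a - s * b)\<^sup>2 + (s * a + c * b)\<^sup>2 = (c\<^sup>2 + s\<^sup>2) * (a\<^sup>2 + b\<^sup>2)"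
    unfolding power2_eq_square by algebra
  then show ?thesis using cs by simp
qed

lemma gvec_sumsq:
  assumes "finite I" "p \<in> I" "q \<in> I" "p \<noteq> q" "c\<^sup>2 + s\<^sup>2 = 1"
  shows "(\<Sum>i\<in>I. (gvec p q c s m i)\<^sup>2) = (\<Sum>i\<in>I. (m i)\<^sup>2)"
proof -
  have "(\<Sum>i\<in>I. (gvec p q c s m i)\<^sup>2) = (gvec p q c s m p)\<^sup>2 + (gvec p q c s m q)\<^sup>2 + (\<Sum>i\<in>I - {p,q}. (gvec p q c s m i)\<^sup>2)"
    using assms(1-4) by (rule sum_two)
  also have "(\<Sum>i\<in>I - {p,q}. (gvec p q c s m i)\<^sup>2) = (\<Sum>i\<in>I - {p,q}. (m i)\<^sup>2)"
    by (rule sum.cong) (auto simp: gvec_def)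
  also have "(gvec p q c s m p)\<^sup>2 + (gvec p q c s m q)\<^sup>2 = (m p)\<^sup>2 + (m q)\<^sup>2"
    using rot_sq[of c "-s" "m p" "m q"] assms(4,5) by (simp add: gvec_def algebra_simps)
  also have "(m p)\<^sup>2 + (m q)\<^sup>2 + (\<Sum>i\<in>I - {p,q}. (m i)\<^sup>2) = (\<Sum>i\<in>I. (m i)\<^sup>2)"
    using sum_two[OF assms(1-4), of "\<lambda>i. (m i)\<^sup>2"] by simp
  finally show ?thesis .
qed

lemma zero_out_aux:
  fixes \<Phi> :: "(nat \<Rightarrow> real) \<Rightarrow> 'x"
  assumes inv: "\<And>m q c s. 0 < q \<Longrightarrow> q < N \<Longrightarrow> c\<^sup>2 + s\<^sup>2 = 1 \<Longrightarrow> c \<noteq> -1 \<Longrightarrow> \<Phi> (gvec 0 q c s m) = \<Phi> m"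
    and "j \<le> N"
  shows "\<exists>m'. \<Phi> m' = \<Phi> m \<and> (\<Sum>i<N. (m' i)\<^sup>2) = (\<Sum>i<N. (m i)\<^sup>2) \<and> (\<forall>i. 0 < i \<and> i < j \<longrightarrow> m' i = 0)"
  using assms(2)
proof (induction j)
  case 0
  then show ?case by auto
next
  case (Suc j)
  then obtain m' where m': "\<Phi> m' = \<Phi> m" "(\<Sum>i<N. (m' i)\<^sup>2) = (\<Sum>i<N. (m i)\<^sup>2)"
    "\<forall>i. 0 < i \<and> i < j \<longrightarrow> m' i = 0" by auto
  show ?case
  proof (cases "j = 0 \<or> m' j = 0")
    case True
    then show ?thesis using m' by (intro exI[of _ m']) (auto simp: less_Suc_eq)
  next
    case False
    then have j0: "0 < j" and mj: "m' j \<noteq> 0" by auto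
    have jN: "j < N" using Suc by simp
    define r where "r = sqrt ((m' 0)\<^sup>2 + (m' j)\<^sup>2)"
    have r2: "r\<^sup>2 = (m' 0)\<^sup>2 + (m' j)\<^sup>2" unfolding r_def by simp
    have rpos: "r > 0" unfolding r_def using mj by (simp add: add_nonneg_pos)
    define c where "c = m' 0 / r"
    define s where "s = m' j / r"
    have "c\<^sup>2 + s\<^sup>2 = ((m' 0)\<^sup>2 + (m' j)\<^sup>2) / r\<^sup>2"
      unfolding c_def s_def by (simp only: power_divide add_divide_distrib)
    then have cs: "c\<^sup>2 + s\<^sup>2 = 1" using r2 rpos mj by simp
    have cne: "c \<noteq> -1"
    proof
      assume "c = -1"
      then have "s\<^sup>2 = 0" using cs by simp
      then show False using mj rpos unfolding s_def by simp
    qed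
    define m'' where "m'' = gvec 0 j c s m'"
    have "m'' j = - s * m' 0 + c * m' j" unfolding m''_def gvec_def using j0 by simp
    also have "\<dots> = 0" unfolding c_def s_def by simp
    finally have "m'' j = 0" .
    moreover have "m'' i = m' i" if "i \<noteq> 0" "i \<noteq> j" for i
      unfolding m''_def gvec_def using that by simp
    ultimately have z: "\<forall>i. 0 < i \<and> i < Suc j \<longrightarrow> m'' i = 0" using m'(3) by (auto simp: less_Suc_eq)
    have "(\<Sum>i<N. (m'' i)\<^sup>2) = (\<Sum>i<N. (m' i)\<^sup>2)"
      unfolding m''_def using jN j0 by (intro gvec_sumsq[OF _ _ _ _ cs]) auto
    moreover have "\<Phi> m'' = \<Phi> m'" unfolding m''_def using inv[OF j0 jN cs cne] .
    ultimately show ?thesis using m' z by (intro exI[of _ m'']) auto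
  qed
qed

lemma zero_out:
  fixes \<Phi> :: "(nat \<Rightarrow> real) \<Rightarrow> 'x"
  assumes inv: "\<And>m q c s. 0 < q \<Longrightarrow> q < N \<Longrightarrow> c\<^sup>2 + s\<^sup>2 = 1 \<Longrightarrow> c \<noteq> -1 \<Longrightarrow> \<Phi> (gvec 0 q c s m) = \<Phi> m"
  shows "\<exists>m'. \<Phi> m' = \<Phi> m \<and> (\<Sum>i<N. (m' i)\<^sup>2) = (\<Sum>i<N. (m i)\<^sup>2) \<and> (\<forall>i. 0 < i \<and> i < N \<longrightarrow> m' i = 0)"
  by (rule zero_out_aux[OF inv order.refl])

definition lc :: "nat \<Rightarrow> (nat \<Rightarrow> real) \<Rightarrow> (nat \<times> 'b \<Rightarrow> real) \<Rightarrow> 'b \<Rightarrow> real" where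
  "lc n m A k = (\<Sum>i<n. m i * A (i, k))"

lemma lc_Lg:
  assumes "p < n" "q < n" "p \<noteq> q" "k \<in> J"
  shows "lc n m (Lg p q c s J A) k = lc n (gvec p q c s m) A k"
proof -
  have "lc n m (Lg p q c s J A) k = m p * (c * A (p,k) - s * A (q,k)) + m q * (s * A (p,k) + c * A (q,k))
      + (\<Sum>i\<in>{..<n} - {p,q}. m i * A (i,k))"
    unfolding lc_def using assms by (subst sum_two[of _ p q]) (auto simp: Lg_def intro!: sum.cong)
  also have "\<dots> = gvec p q c s m p * A (p,k) + gvec p q c s m q * A (q,k)
      + (\<Sum>i\<in>{..<n} - {p,q}. gvec p q c s m i * A (i,k))"
    using assms by (auto simp: gvec_def algebra_simps intro!: sum.cong)
  also have "\<dots> = lc n (gvec p q c s m) A k"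
    unfolding lc_def using assms by (subst (2) sum_two[of _ p q]) auto
  finally show ?thesis .
qed

lemma Rg_row:
  assumes "p < d" "q < d" "p \<noteq> q" "l < n"
  shows "(\<Sum>j<d. Rg p q c s {..<n} A (l, j) * x j) = (\<Sum>j<d. A (l, j) * gvec p q c s x j)"
proof -
  have "(\<Sum>j<d. Rg p q c s {..<n} A (l, j) * x j) = (c * A (l,p) - s * A (l,q)) * x p + (s * A (l,p) + c * A (l,q)) * x q
      + (\<Sum>j\<in>{..<d} - {p,q}. A (l, j) * x j)"
    using assms by (subst sum_two[of _ p q]) (auto simp: Rg_def intro!: sum.cong)
  also have "\<dots> = A (l,p) * gvec p q c s x p + A (l,q) * gvec p q c s x q
      + (\<Sum>j\<in>{..<d} - {p,q}. A (l, j) * gvec p q c s x j)"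
    using assms by (auto simp: gvec_def algebra_simps intro!: sum.cong)
  also have "\<dots> = (\<Sum>j<d. A (l, j) * gvec p q c s x j)"
    using assms by (subst (2) sum_two[of _ p q]) auto
  finally show ?thesis .
qed

lemma AtMAx_Rg:
  assumes pq: "p < d" "q < d" "p \<noteq> q" and cs: "c\<^sup>2 + s\<^sup>2 = 1"
  shows "vec_norm d (AtMAx n d (Rg p q c s {..<n} A) M x) = vec_norm d (AtMAx n d A M (gvec p q c s x))"
proof -
  define V where "V = AtMAx n d A M (gvec p q c s x)"
  define W where "W = AtMAx n d (Rg p q c s {..<n} A) M x"
  define u where "u = (\<lambda>i. \<Sum>l<n. M i l * (\<Sum>j<d. A (l, j) * gvec p q c s x j))"
  have Vu: "V k = (\<Sum>i<n. A (i, k) * u i)" for k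
    unfolding V_def u_def AtMAx_def by (simp add: sum_distrib_left mult.assoc)
  have Wu: "W k = (\<Sum>i<n. Rg p q c s {..<n} A (i, k) * u i)" for k
  proof -
    have "W k = (\<Sum>i<n. \<Sum>l<n. Rg p q c s {..<n} A (i, k) * M i l * (\<Sum>j<d. A (l, j) * gvec p q c s x j))"
      unfolding W_def AtMAx_def by (intro sum.cong refl) (simp add: Rg_row[OF pq])
    then show ?thesis unfolding u_def by (simp add: sum_distrib_left mult.assoc)
  qed
  have Wo: "W k = V k" if "k \<noteq> p" "k \<noteq> q" for k
    unfolding Wu Vu using that by (intro sum.cong) (auto simp: Rg_def)
  have Wp: "W p = c * V p - s * V q"
    unfolding Wu Vu using pq
    by (simp add: Rg_def sum_distrib_left sum_subtractf[symmetric] algebra_simps)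
  have Wq: "W q = s * V p + c * V q"
    unfolding Wu Vu using pq
    by (simp add: Rg_def sum_distrib_left sum.distrib[symmetric] algebra_simps)
  have "(\<Sum>k<d. (W k)\<^sup>2) = (W p)\<^sup>2 + (W q)\<^sup>2 + (\<Sum>k\<in>{..<d} - {p,q}. (W k)\<^sup>2)"
    using pq by (intro sum_two) auto
  also have "\<dots> = (V p)\<^sup>2 + (V q)\<^sup>2 + (\<Sum>k\<in>{..<d} - {p,q}. (V k)\<^sup>2)"
    using rot_sq[OF cs, of "V p" "V q"] Wp Wq Wo by simp
  also have "\<dots> = (\<Sum>k<d. (V k)\<^sup>2)"
    using pq by (intro sum_two[symmetric]) auto
  finally show ?thesis unfolding vec_norm_def V_def W_def by simp
qed

lemma sets_AtMAx: "{A \<in> space (GM K). vec_norm d (AtMAx n d A M x) \<le> T} \<in> sets (GM K)"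
  unfolding vec_norm_def AtMAx_def by measurable

lemma sets_lc: "{A \<in> space (GM K). (\<Sum>k\<in>J'. (lc n m A k)\<^sup>2) \<le> s} \<in> sets (GM K)"
  unfolding lc_def by measurable

lemma app1:
  assumes d: "d \<ge> 1"
  shows "\<exists>x'. (\<forall>j. 0 < j \<and> j < d \<longrightarrow> x' j = 0) \<and> (\<Sum>j<d. (x' j)\<^sup>2) = (\<Sum>j<d. (x j)\<^sup>2) \<and>
    emeasure (GM ({..<n}\<times>{..<d})) {A \<in> space (GM ({..<n}\<times>{..<d})). vec_norm d (AtMAx n d A M x') \<le> T}
    = emeasure (GM ({..<n}\<times>{..<d})) {A \<in> space (GM ({..<n}\<times>{..<d})). vec_norm d (AtMAx n d A M x) \<le> T}"
proof -
  let ?K = "{..<n}\<times>{..<d}"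
  define \<Phi> where "\<Phi> x = emeasure (GM ?K) {A \<in> space (GM ?K). vec_norm d (AtMAx n d A M x) \<le> T}" for x
  have inv: "\<Phi> (gvec 0 q c s x) = \<Phi> x" if q: "0 < q" "q < d" and cs: "c\<^sup>2 + s\<^sup>2 = 1" and c: "c \<noteq> -1" for x q c s
  proof -
    have seq: "{A \<in> space (GM ?K). vec_norm d (AtMAx n d A M (gvec 0 q c s x)) \<le> T}
        = {A \<in> space (GM ?K). vec_norm d (AtMAx n d (Rg 0 q c s {..<n} A) M x) \<le> T}"
    proof -
      have e: "vec_norm d (AtMAx n d (Rg 0 q c s {..<n} A) M x) = vec_norm d (AtMAx n d A M (gvec 0 q c s x))" for A
        using q by (intro AtMAx_Rg[OF _ _ _ cs]) auto
      show ?thesis by (simp only: e)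
    qed
    have "emeasure (GM ?K) {A \<in> space (GM ?K). vec_norm d (AtMAx n d (Rg 0 q c s {..<n} A) M x) \<le> T} = emeasure (GM ?K) {A \<in> space (GM ?K). vec_norm d (AtMAx n d A M x) \<le> T}"
    proof (rule ev_transfer[where \<Phi>="Rg 0 q c s {..<n}" and Q="\<lambda>A. vec_norm d (AtMAx n d A M x) \<le> T"])
      show "(\<integral>\<^sup>+A. h (Rg 0 q c s {..<n} A) \<partial>GM ?K) = (\<integral>\<^sup>+A. h A \<partial>GM ?K)"
        if "h \<in> borel_measurable (GM ?K)" for h
        using q by (intro Rg_GM[OF _ _ _ _ _ cs c _ _ that]) auto
      show "Rg 0 q c s {..<n} \<in> GM ?K \<rightarrow>\<^sub>M GM ?K" using q by (intro Rg_meas) auto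
    qed (rule sets_AtMAx)
    then show ?thesis unfolding \<Phi>_def seq .
  qed
  have "\<exists>x'. \<Phi> x' = \<Phi> x \<and> (\<Sum>i<d. (x' i)\<^sup>2) = (\<Sum>i<d. (x i)\<^sup>2) \<and> (\<forall>i. 0 < i \<and> i < d \<longrightarrow> x' i = 0)"
    by (rule zero_out) (rule inv)
  then obtain x' where x': "\<Phi> x' = \<Phi> x" "(\<Sum>i<d. (x' i)\<^sup>2) = (\<Sum>i<d. (x i)\<^sup>2)" "\<forall>i. 0 < i \<and> i < d \<longrightarrow> x' i = 0"
    by (elim exE conjE)
  show ?thesis
    by (rule exI[of _ x']) (use x' in \<open>simp only: \<Phi>_def\<close>)
qed

lemma lc_zero:
  assumes "n \<ge> 1" "\<forall>i. 0 < i \<and> i < n \<longrightarrow> m i = 0"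
  shows "lc n m A k = m 0 * A (0, k)"
proof -
  have "lc n m A k = (\<Sum>i\<in>{..<n}. if i = 0 then m 0 * A (0, k) else 0)"
    unfolding lc_def using assms by (intro sum.cong) auto
  also have "\<dots> = m 0 * A (0, k)" using assms by simp
  finally show ?thesis .
qed

lemma app_left:
  fixes J J' :: "'b set"
  assumes n: "n \<ge> 1" and J: "finite J" "J' \<subseteq> J"
  shows "emeasure (GM ({..<n}\<times>J)) {A \<in> space (GM ({..<n}\<times>J)). (\<Sum>k\<in>J'. (lc n m A k)\<^sup>2) \<le> t}
    = emeasure (GM ({..<n}\<times>J)) {A \<in> space (GM ({..<n}\<times>J)). (\<Sum>i<n. (m i)\<^sup>2) * (\<Sum>k\<in>J'. (A (0, k))\<^sup>2) \<le> t}"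
proof -
  let ?K = "{..<n}\<times>J"
  define \<Phi> where "\<Phi> m = emeasure (GM ?K) {A \<in> space (GM ?K). (\<Sum>k\<in>J'. (lc n m A k)\<^sup>2) \<le> t}" for m
  have inv: "\<Phi> (gvec 0 q c s m) = \<Phi> m" if q: "0 < q" "q < n" and cs: "c\<^sup>2 + s\<^sup>2 = 1" and c: "c \<noteq> -1" for m q c s
  proof -
    have seq: "{A \<in> space (GM ?K). (\<Sum>k\<in>J'. (lc n (gvec 0 q c s m) A k)\<^sup>2) \<le> t}
        = {A \<in> space (GM ?K). (\<Sum>k\<in>J'. (lc n m (Lg 0 q c s J A) k)\<^sup>2) \<le> t}"
    proof -
      have "(\<Sum>k\<in>J'. (lc n (gvec 0 q c s m) A k)\<^sup>2) = (\<Sum>k\<in>J'. (lc n m (Lg 0 q c s J A) k)\<^sup>2)" for A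
        using q J by (intro sum.cong refl) (auto simp: lc_Lg)
      then show ?thesis by simp
    qed
    have "emeasure (GM ?K) {A \<in> space (GM ?K). (\<Sum>k\<in>J'. (lc n m (Lg 0 q c s J A) k)\<^sup>2) \<le> t} = emeasure (GM ?K) {A \<in> space (GM ?K). (\<Sum>k\<in>J'. (lc n m A k)\<^sup>2) \<le> t}"
    proof (rule ev_transfer[where \<Phi>="Lg 0 q c s J" and Q="\<lambda>A. (\<Sum>k\<in>J'. (lc n m A k)\<^sup>2) \<le> t"])
      show "(\<integral>\<^sup>+A. h (Lg 0 q c s J A) \<partial>GM ?K) = (\<integral>\<^sup>+A. h A \<partial>GM ?K)"
        if "h \<in> borel_measurable (GM ?K)" for h
        using q J by (intro Lg_GM[OF _ _ _ _ _ cs c _ _ that]) auto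
      show "Lg 0 q c s J \<in> GM ?K \<rightarrow>\<^sub>M GM ?K" using q by (intro Lg_meas) auto
    qed (rule sets_lc)
    then show ?thesis unfolding \<Phi>_def seq .
  qed
  have "\<exists>m'. \<Phi> m' = \<Phi> m \<and> (\<Sum>i<n. (m' i)\<^sup>2) = (\<Sum>i<n. (m i)\<^sup>2) \<and> (\<forall>i. 0 < i \<and> i < n \<longrightarrow> m' i = 0)"
    by (rule zero_out) (rule inv)
  then obtain m' where
    m': "\<Phi> m' = \<Phi> m" "(\<Sum>i<n. (m' i)\<^sup>2) = (\<Sum>i<n. (m i)\<^sup>2)" "\<forall>i. 0 < i \<and> i < n \<longrightarrow> m' i = 0"
    by (elim exE conjE)
  have sq: "(\<Sum>i<n. (m' i)\<^sup>2) = (m' 0)\<^sup>2"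
  proof -
    have "(\<Sum>i<n. (m' i)\<^sup>2) = (\<Sum>i\<in>{..<n}. if i = 0 then (m' 0)\<^sup>2 else 0)"
      using m'(3) by (intro sum.cong) auto
    also have "\<dots> = (m' 0)\<^sup>2" using n by simp
    finally show ?thesis .
  qed
  have "(\<Sum>k\<in>J'. (lc n m' A k)\<^sup>2) = (\<Sum>i<n. (m i)\<^sup>2) * (\<Sum>k\<in>J'. (A (0, k))\<^sup>2)" for A
    using m'(2) sq by (simp add: lc_zero[OF n m'(3)] sum_distrib_left power_mult_distrib)
  then have "\<Phi> m' = emeasure (GM ?K) {A \<in> space (GM ?K). (\<Sum>i<n. (m i)\<^sup>2) * (\<Sum>k\<in>J'. (A (0, k))\<^sup>2) \<le> t}"
    unfolding \<Phi>_def by simp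
  then show ?thesis using m'(1) unfolding \<Phi>_def by simp
qed

lemma NN_UNIV: "emeasure NN UNIV = 1"
  using prob_space.emeasure_space_1[OF probNN] by simp

lemma nn_one_NN: "(\<integral>\<^sup>+v. 1 \<partial>NN) = 1"
  using prob_space.emeasure_space_1[OF probNN] by simp

lemma marg:
  fixes g :: "real \<Rightarrow> ennreal"
  assumes K: "finite K" "\<kappa>0 \<in> K" and g[measurable]: "g \<in> borel_measurable borel"
  shows "(\<integral>\<^sup>+A. g (A \<kappa>0) \<partial>GM K) = (\<integral>\<^sup>+v. g v \<partial>NN)"
proof -
  interpret P: product_sigma_finite "\<lambda>_::'i. NN" by (rule PS)
  define F where "F = (\<lambda>\<kappa>. if \<kappa> = \<kappa>0 then g else (\<lambda>_. 1::ennreal))"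
  have "(\<integral>\<^sup>+A. g (A \<kappa>0) \<partial>GM K) = (\<integral>\<^sup>+A. (\<Prod>\<kappa>\<in>K. F \<kappa> (A \<kappa>)) \<partial>GM K)"
  proof (rule nn_integral_cong)
    fix A
    have "(\<Prod>\<kappa>\<in>K. F \<kappa> (A \<kappa>)) = (\<Prod>\<kappa>\<in>K. if \<kappa> = \<kappa>0 then g (A \<kappa>) else 1)"
      unfolding F_def by (intro prod.cong) auto
    also have "\<dots> = g (A \<kappa>0)" using K by simp
    finally show "g (A \<kappa>0) = (\<Prod>\<kappa>\<in>K. F \<kappa> (A \<kappa>))" by simp
  qed
  also have "\<dots> = (\<Prod>\<kappa>\<in>K. integral\<^sup>N NN (F \<kappa>))"
    using K by (intro P.product_nn_integral_prod) (auto simp: F_def)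
  also have "\<dots> = (\<Prod>\<kappa>\<in>K. if \<kappa> = \<kappa>0 then integral\<^sup>N NN g else 1)"
    by (intro prod.cong) (auto simp: F_def nn_one_NN NN_UNIV)
  also have "\<dots> = integral\<^sup>N NN g" using K by simp
  finally show ?thesis .
qed

lemma std_normal_le: "std_normal_density x \<le> 1 / sqrt (2 * pi)"
  unfolding std_normal_density_def by (simp add: divide_le_cancel)

lemma NN_interval:
  assumes b: "b \<ge> 0"
  shows "emeasure NN {v. \<bar>v\<bar> \<le> b} \<le> ennreal (2 * b / sqrt (2 * pi))"
proof -
  have S: "{v. \<bar>v\<bar> \<le> b} = {-b..b}" by auto
  have "emeasure NN {-b..b} = (\<integral>\<^sup>+v. ennreal (std_normal_density v) * indicator {-b..b} v \<partial>lborel)"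
    by (subst emeasure_density) auto
  also have "\<dots> \<le> (\<integral>\<^sup>+v. ennreal (1 / sqrt (2 * pi)) * indicator {-b..b} v \<partial>lborel)"
    by (intro nn_integral_mono mult_right_mono) (auto simp: std_normal_le)
  also have "\<dots> = ennreal (1 / sqrt (2 * pi)) * emeasure lborel {-b..b}"
    by (subst nn_integral_cmult_indicator) auto
  also have "\<dots> = ennreal (2 * b / sqrt (2 * pi))"
    using b by (simp add: ennreal_mult'[symmetric])
  finally show ?thesis unfolding S .
qed

lemma gauss_exp:
  assumes t: "t > 0"
  shows "(\<integral>\<^sup>+v. ennreal (exp (- t * v\<^sup>2)) \<partial>NN) = ennreal (1 / sqrt (1 + 2 * t))"
proof -
  define w where "w = 1 + 2 * t"
  define \<sigma> where "\<sigma> = 1 / sqrt w"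
  have w: "w > 0" unfolding w_def using t by simp
  have sig: "\<sigma> > 0" unfolding \<sigma>_def using w by simp
  have sig2: "\<sigma>\<^sup>2 = 1 / w" unfolding \<sigma>_def using w by (simp add: power_divide)
  have pt: "std_normal_density v * exp (- t * v\<^sup>2) = \<sigma> * normal_density 0 \<sigma> v" for v
  proof -
    have "sqrt (2 * pi * \<sigma>\<^sup>2) = sqrt (2 * pi) / sqrt w"
      unfolding sig2 by (simp add: real_sqrt_divide)
    then have c1: "\<sigma> * (1 / sqrt (2 * pi * \<sigma>\<^sup>2)) = 1 / sqrt (2 * pi)"
      unfolding \<sigma>_def using w by simp
    have c2: "- (v - 0)\<^sup>2 / (2 * \<sigma>\<^sup>2) = - v\<^sup>2 / 2 + - t * v\<^sup>2"
      unfolding sig2 w_def using t by (simp add: field_simps)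
    show ?thesis unfolding normal_density_def std_normal_density_def
      by (simp only: c2 exp_add mult.assoc[symmetric] c1) (simp add: mult_ac)
  qed
  have "(\<integral>\<^sup>+v. ennreal (exp (- t * v\<^sup>2)) \<partial>NN) = (\<integral>\<^sup>+v. ennreal (std_normal_density v) * ennreal (exp (- t * v\<^sup>2)) \<partial>lborel)"
    by (subst nn_integral_density) auto
  also have "\<dots> = (\<integral>\<^sup>+v. ennreal \<sigma> * ennreal (normal_density 0 \<sigma> v) \<partial>lborel)"
  proof (intro nn_integral_cong)
    fix v :: real
    have "ennreal (std_normal_density v) * ennreal (exp (- t * v\<^sup>2)) = ennreal (std_normal_density v * exp (- t * v\<^sup>2))"
      by (simp add: ennreal_mult)
    also have "\<dots> = ennreal (\<sigma> * normal_density 0 \<sigma> v)" by (simp only: pt)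
    also have "\<dots> = ennreal \<sigma> * ennreal (normal_density 0 \<sigma> v)" using sig by (simp add: ennreal_mult)
    finally show "ennreal (std_normal_density v) * ennreal (exp (- t * v\<^sup>2)) = ennreal \<sigma> * ennreal (normal_density 0 \<sigma> v)" .
  qed
  also have "\<dots> = ennreal \<sigma> * (\<integral>\<^sup>+v. ennreal (normal_density 0 \<sigma> v) \<partial>lborel)"
    by (subst nn_integral_cmult) auto
  also have "(\<integral>\<^sup>+v. ennreal (normal_density 0 \<sigma> v) \<partial>lborel) = 1"
    using sig by (subst nn_integral_eq_integral) auto
  finally show ?thesis unfolding \<sigma>_def w_def by simp
qed

lemma prod_first_row:
  fixes f :: "'b \<Rightarrow> 'c::comm_monoid_mult"
  assumes "finite I" "(0::nat) \<in> I" "finite J"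
  shows "(\<Prod>\<kappa>\<in>I \<times> J. if fst \<kappa> = 0 then f (snd \<kappa>) else 1) = (\<Prod>k\<in>J. f k)"
proof -
  have "(\<Prod>\<kappa>\<in>I \<times> J. if fst \<kappa> = 0 then f (snd \<kappa>) else 1) = (\<Prod>i\<in>I. \<Prod>k\<in>J. if i = 0 then f k else 1)"
    by (simp add: prod.cartesian_product case_prod_beta')
  also have "\<dots> = (\<Prod>i\<in>I. if i = 0 then (\<Prod>k\<in>J. f k) else 1)"
    by (intro prod.cong) auto
  also have "\<dots> = (\<Prod>k\<in>J. f k)" using assms by simp
  finally show ?thesis .
qed

lemma chern:
  fixes I :: "nat set" and J :: "'b set"
  assumes I: "finite I" "0 \<in> I" and J: "finite J" and t: "t > 0"
  shows "emeasure (GM (I\<times>J)) {A \<in> space (GM (I\<times>J)). (\<Sum>k\<in>J. (A (0,k))\<^sup>2) \<le> s}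
     \<le> ennreal (exp (t * s) * (1 / sqrt (1 + 2 * t)) ^ card J)"
proof -
  interpret P: product_sigma_finite "\<lambda>_::nat\<times>'b. NN" by (rule PS)
  let ?K = "I \<times> J"
  let ?S = "{A \<in> space (GM ?K). (\<Sum>k\<in>J. (A (0,k))\<^sup>2) \<le> s}"
  define Gr where "Gr = (\<lambda>(\<kappa>::nat\<times>'b) v::real. if fst \<kappa> = 0 then exp (- t * v\<^sup>2) else 1)"
  define G where "G = (\<lambda>\<kappa> v. ennreal (Gr \<kappa> v))"
  have finK: "finite ?K" using I J by simp
  have Gm[measurable]: "G \<kappa> \<in> borel_measurable NN" for \<kappa>
    unfolding G_def Gr_def by (simp add: measurable_cong_sets[OF sets_NN refl])
  have prodGr: "(\<Prod>\<kappa>\<in>?K. Gr \<kappa> (A \<kappa>)) = exp (- t * (\<Sum>k\<in>J. (A (0,k))\<^sup>2))" for A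
  proof -
    have "(\<Prod>\<kappa>\<in>?K. Gr \<kappa> (A \<kappa>)) = (\<Prod>\<kappa>\<in>?K. if fst \<kappa> = 0 then exp (- t * (A (0, snd \<kappa>))\<^sup>2) else 1)"
      unfolding Gr_def by (intro prod.cong) auto
    also have "\<dots> = (\<Prod>k\<in>J. exp (- t * (A (0, k))\<^sup>2))"
      by (rule prod_first_row[OF I J])
    also have "\<dots> = exp (- t * (\<Sum>k\<in>J. (A (0,k))\<^sup>2))"
      using J by (simp add: exp_sum sum_distrib_left)
    finally show ?thesis .
  qed
  have Gr_nn: "0 \<le> Gr \<kappa> v" for \<kappa> v unfolding Gr_def by simp
  have prodG: "(\<Prod>\<kappa>\<in>?K. G \<kappa> (A \<kappa>)) = ennreal (exp (- t * (\<Sum>k\<in>J. (A (0,k))\<^sup>2)))" for A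
    unfolding G_def using prodGr[of A] by (simp add: prod_ennreal Gr_nn)
  have "emeasure (GM ?K) ?S = (\<integral>\<^sup>+A. indicator ?S A \<partial>GM ?K)"
    by (rule nn_integral_indicator[symmetric]) measurable
  also have "\<dots> \<le> (\<integral>\<^sup>+A. ennreal (exp (t * s)) * (\<Prod>\<kappa>\<in>?K. G \<kappa> (A \<kappa>)) \<partial>GM ?K)"
  proof (rule nn_integral_mono)
    fix A assume "A \<in> space (GM ?K)"
    show "indicator ?S A \<le> ennreal (exp (t * s)) * (\<Prod>\<kappa>\<in>?K. G \<kappa> (A \<kappa>))"
    proof (cases "A \<in> ?S")
      case True
      then have "(\<Sum>k\<in>J. (A (0,k))\<^sup>2) \<le> s" by simp
      then have "1 \<le> exp (t * s) * exp (- t * (\<Sum>k\<in>J. (A (0,k))\<^sup>2))"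
        using t by (simp add: exp_add[symmetric] algebra_simps mult_left_mono)
      then show ?thesis using True by (simp add: prodG ennreal_mult'[symmetric])
    qed simp
  qed
  also have "\<dots> = ennreal (exp (t * s)) * (\<integral>\<^sup>+A. (\<Prod>\<kappa>\<in>?K. G \<kappa> (A \<kappa>)) \<partial>GM ?K)"
    by (rule nn_integral_cmult) measurable
  also have "(\<integral>\<^sup>+A. (\<Prod>\<kappa>\<in>?K. G \<kappa> (A \<kappa>)) \<partial>GM ?K) = (\<Prod>\<kappa>\<in>?K. integral\<^sup>N NN (G \<kappa>))"
    using finK by (intro P.product_nn_integral_prod) auto
  also have "\<dots> = (\<Prod>\<kappa>\<in>?K. if fst \<kappa> = 0 then ennreal (1 / sqrt (1 + 2 * t)) else 1)"
  proof -
    have ge: "(\<integral>\<^sup>+v. ennreal (exp (- (t * v\<^sup>2))) \<partial>NN) = ennreal (1 / sqrt (1 + 2 * t))"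
      using gauss_exp[OF t] by simp
    show ?thesis by (intro prod.cong) (auto simp: G_def Gr_def ge nn_one_NN NN_UNIV)
  qed
  also have "\<dots> = (\<Prod>k\<in>J. ennreal (1 / sqrt (1 + 2 * t)))"
    by (rule prod_first_row[OF I J])
  also have "\<dots> = ennreal ((1 / sqrt (1 + 2 * t)) ^ card J)"
    using t by (simp add: ennreal_power)
  finally show ?thesis by (simp add: ennreal_mult'[symmetric])
qed

lemma E1_bound:
  fixes J :: "'b set"
  assumes n: "n \<ge> 1" and J: "finite J" "k0 \<in> J" and R2: "(\<Sum>i<n. (m i)\<^sup>2) > 0" and a: "a \<ge> 0"
  shows "emeasure (GM ({..<n}\<times>J)) {A \<in> space (GM ({..<n}\<times>J)). (lc n m A k0)\<^sup>2 \<le> a\<^sup>2}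
    \<le> ennreal (2 * (a / sqrt (\<Sum>i<n. (m i)\<^sup>2)) / sqrt (2 * pi))"
proof -
  let ?K = "{..<n}\<times>J"
  define R where "R = (\<Sum>i<n. (m i)\<^sup>2)"
  have R: "R > 0" using R2 unfolding R_def .
  define B where "B = {v::real. \<bar>v\<bar> \<le> a / sqrt R}"
  have B: "R * v\<^sup>2 \<le> a\<^sup>2 \<longleftrightarrow> v \<in> B" for v
  proof -
    have "R * v\<^sup>2 = (sqrt R * \<bar>v\<bar>)\<^sup>2" using R by (simp add: power_mult_distrib)
    then have "R * v\<^sup>2 \<le> a\<^sup>2 \<longleftrightarrow> sqrt R * \<bar>v\<bar> \<le> a"
      using a R by (simp add: power2_le_iff_abs_le abs_mult)
    also have "\<dots> \<longleftrightarrow> \<bar>v\<bar> \<le> a / sqrt R" using R by (simp add: field_simps)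
    finally show ?thesis unfolding B_def by simp
  qed
  have Bm: "B \<in> sets borel" unfolding B_def by measurable
  have e1: "emeasure (GM ?K) {A \<in> space (GM ?K). (lc n m A k0)\<^sup>2 \<le> a\<^sup>2}
      = emeasure (GM ?K) {A \<in> space (GM ?K). (\<Sum>k\<in>{k0}. (lc n m A k)\<^sup>2) \<le> a\<^sup>2}" by simp
  have e2: "emeasure (GM ?K) {A \<in> space (GM ?K). (\<Sum>k\<in>{k0}. (lc n m A k)\<^sup>2) \<le> a\<^sup>2}
     = emeasure (GM ?K) {A \<in> space (GM ?K). R * (\<Sum>k\<in>{k0}. (A (0, k))\<^sup>2) \<le> a\<^sup>2}"
    unfolding R_def using J by (intro app_left[OF n]) auto
  have e3: "{A \<in> space (GM ?K). R * (\<Sum>k\<in>{k0}. (A (0, k))\<^sup>2) \<le> a\<^sup>2} = {A \<in> space (GM ?K). A (0, k0) \<in> B}"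
    using B by simp
  have S: "{A \<in> space (GM ?K). A (0, k0) \<in> B} \<in> sets (GM ?K)" using Bm by measurable
  have e4: "emeasure (GM ?K) {A \<in> space (GM ?K). A (0, k0) \<in> B} = (\<integral>\<^sup>+A. indicator B (A (0, k0)) \<partial>GM ?K)"
  proof -
    have "emeasure (GM ?K) {A \<in> space (GM ?K). A (0, k0) \<in> B} = (\<integral>\<^sup>+A. indicator {A \<in> space (GM ?K). A (0, k0) \<in> B} A \<partial>GM ?K)"
      using S by simp
    also have "\<dots> = (\<integral>\<^sup>+A. indicator B (A (0, k0)) \<partial>GM ?K)"
      by (rule nn_integral_cong) (simp add: indicator_def)
    finally show ?thesis .
  qed
  have e5: "(\<integral>\<^sup>+A. indicator B (A (0, k0)) \<partial>GM ?K) = (\<integral>\<^sup>+v. indicator B v \<partial>NN)"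
    using J n Bm by (intro marg) auto
  have e6: "(\<integral>\<^sup>+v. indicator B v \<partial>NN) = emeasure NN B"
    using Bm by simp
  have e7: "emeasure NN B \<le> ennreal (2 * (a / sqrt R) / sqrt (2 * pi))"
    unfolding B_def using a R by (intro NN_interval) auto
  show ?thesis using e1 e2 e3 e4 e5 e6 e7 unfolding R_def by simp
qed

lemma E2_inner:
  fixes J :: "'b set"
  assumes n: "n \<ge> 1" and J: "finite J" and w: "(\<Sum>i<n. (w i)\<^sup>2) \<ge> a\<^sup>2" and a: "a > 0" and t: "t > 0"
    and s0: "s0 \<ge> 0"
  shows "emeasure (GM ({..<n}\<times>J)) {A \<in> space (GM ({..<n}\<times>J)). (\<Sum>k\<in>J. (lc n w A k)\<^sup>2) \<le> s0}
    \<le> ennreal (exp (t * (s0 / a\<^sup>2)) * (1 / sqrt (1 + 2 * t)) ^ card J)"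
proof -
  let ?K = "{..<n}\<times>J"
  let ?R = "\<Sum>i<n. (w i)\<^sup>2"
  have "emeasure (GM ?K) {A \<in> space (GM ?K). (\<Sum>k\<in>J. (lc n w A k)\<^sup>2) \<le> s0}
     = emeasure (GM ?K) {A \<in> space (GM ?K). ?R * (\<Sum>k\<in>J. (A (0, k))\<^sup>2) \<le> s0}"
    using J by (intro app_left[OF n]) auto
  also have "\<dots> \<le> emeasure (GM ?K) {A \<in> space (GM ?K). (\<Sum>k\<in>J. (A (0, k))\<^sup>2) \<le> s0 / a\<^sup>2}"
  proof (rule emeasure_mono)
    show "{A \<in> space (GM ?K). ?R * (\<Sum>k\<in>J. (A (0, k))\<^sup>2) \<le> s0} \<subseteq> {A \<in> space (GM ?K). (\<Sum>k\<in>J. (A (0, k))\<^sup>2) \<le> s0 / a\<^sup>2}"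
    proof safe
      fix A assume h: "?R * (\<Sum>k\<in>J. (A (0, k))\<^sup>2) \<le> s0"
      have S0: "0 \<le> (\<Sum>k\<in>J. (A (0, k))\<^sup>2)" by (intro sum_nonneg) auto
      have "a\<^sup>2 * (\<Sum>k\<in>J. (A (0, k))\<^sup>2) \<le> ?R * (\<Sum>k\<in>J. (A (0, k))\<^sup>2)"
        using w S0 by (rule mult_right_mono)
      then have "a\<^sup>2 * (\<Sum>k\<in>J. (A (0, k))\<^sup>2) \<le> s0" using h by linarith
      then show "(\<Sum>k\<in>J. (A (0, k))\<^sup>2) \<le> s0 / a\<^sup>2" using a by (simp add: field_simps)
    qed
    show "{A \<in> space (GM ?K). (\<Sum>k\<in>J. (A (0, k))\<^sup>2) \<le> s0 / a\<^sup>2} \<in> sets (GM ?K)" by measurable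
  qed
  also have "\<dots> \<le> ennreal (exp (t * (s0 / a\<^sup>2)) * (1 / sqrt (1 + 2 * t)) ^ card J)"
    using n J t by (intro chern) auto
  finally show ?thesis .
qed

lemma exp_half_le: "exp (1/2::real) \<le> 2"
proof -
  have "(exp (1/2::real))\<^sup>2 = exp 1" by (simp add: power2_eq_square exp_add[symmetric])
  also have "\<dots> \<le> 2\<^sup>2" using exp_le by simp
  finally show ?thesis by (rule power2_le_imp_le) simp
qed

lemma numeric:
  fixes k :: nat and \<eta> \<theta> s1 :: real
  assumes k: "k \<ge> 1" and \<eta>: "0 < \<eta>" "\<eta> < 1" and \<theta>: "\<theta> = \<eta> powr (1 / real k)"
    and s1: "0 \<le> s1" "s1 \<le> real k * \<theta>\<^sup>2 / 4"
  shows "2 / \<theta>\<^sup>2 - 1/2 > 0"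
    and "exp ((2 / \<theta>\<^sup>2 - 1/2) * s1) * (1 / sqrt (1 + 2 * (2 / \<theta>\<^sup>2 - 1/2))) ^ k \<le> \<eta>"
proof -
  have kpos: "real k > 0" using k by simp
  have th0: "\<theta> > 0" using \<theta> \<eta> by simp
  have th1: "\<theta> < 1"
  proof -
    have "\<eta> powr (1 / real k) < 1 powr (1 / real k)"
      using \<eta> kpos by (intro powr_less_mono2) auto
    then show ?thesis using \<theta> by simp
  qed
  have thk: "\<theta> ^ k = \<eta>"
  proof -
    have "\<theta> ^ k = \<theta> powr real k" using th0 by (simp add: powr_realpow)
    also have "\<dots> = \<eta> powr (1 / real k * real k)" unfolding \<theta> by (simp add: powr_powr)
    also have "\<dots> = \<eta>" using kpos \<eta> by simp
    finally show ?thesis .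
  qed
  have th2: "\<theta>\<^sup>2 < 1" using th0 th1 by (simp add: power_less_one_iff)
  have th2p: "\<theta>\<^sup>2 > 0" using th0 by simp
  show tpos: "2 / \<theta>\<^sup>2 - 1/2 > 0"
  proof -
    have "2 / \<theta>\<^sup>2 > 2" using th2 th2p by (simp add: field_simps)
    then show ?thesis by simp
  qed
  define t where "t = 2 / \<theta>\<^sup>2 - 1/2"
  have w: "1 + 2 * t = (2 / \<theta>)\<^sup>2" unfolding t_def using th0 by (simp add: field_simps power2_eq_square)
  have sq: "1 / sqrt (1 + 2 * t) = \<theta> / 2" unfolding w using th0 by simp
  have pw: "(1 / sqrt (1 + 2 * t)) ^ k = \<eta> / 2 ^ k" unfolding sq by (simp add: power_divide thk)
  have ts: "t * s1 \<le> real k / 2"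
  proof -
    have "t * s1 \<le> (2 / \<theta>\<^sup>2) * s1" unfolding t_def using s1(1) by (intro mult_right_mono) auto
    also have "\<dots> \<le> (2 / \<theta>\<^sup>2) * (real k * \<theta>\<^sup>2 / 4)" using s1 th2p by (intro mult_left_mono) auto
    also have "\<dots> = real k / 2" using th2p by (simp add: field_simps)
    finally show ?thesis .
  qed
  have e: "exp (t * s1) \<le> 2 ^ k"
  proof -
    have "exp (t * s1) \<le> exp (real k / 2)" using ts by simp
    also have "exp (real k / 2) = exp (1/2) ^ k" by (simp add: exp_of_nat_mult[symmetric])
    also have "\<dots> \<le> 2 ^ k" using exp_half_le by (intro power_mono) auto
    finally show ?thesis .
  qed
  have "exp (t * s1) * (1 / sqrt (1 + 2 * t)) ^ k \<le> 2 ^ k * (\<eta> / 2 ^ k)"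
    unfolding pw using e \<eta> by (intro mult_right_mono) auto
  also have "\<dots> = \<eta>" by simp
  finally show "exp ((2 / \<theta>\<^sup>2 - 1/2) * s1) * (1 / sqrt (1 + 2 * (2 / \<theta>\<^sup>2 - 1/2))) ^ k \<le> \<eta>"
    unfolding t_def .
qed

theorem mainTheorem4:
  fixes n d :: nat and M :: "nat \<Rightarrow> nat \<Rightarrow> real" and x :: "nat \<Rightarrow> real" and \<eta> :: real
  assumes "d \<ge> 2"
    and "\<exists>i<n. \<exists>j<n. M i j \<noteq> 0"
    and "\<exists>j<d. x j \<noteq> 0"
    and "0 < \<eta>" and "\<eta> < 1/2"
  shows "measure (gaussian_matrix n d)
     {A \<in> space (gaussian_matrix n d).
        vec_norm d (AtMAx n d A M x)
          \<le> frob_norm n M * vec_norm d x * sqrt (real (d - 1) * pi / (8 * real n))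
             * \<eta> powr (1 + 1 / real (d - 1))} \<le> 2 * \<eta>"
proof -
  have d: "d \<ge> 2" by fact
  have \<eta>: "0 < \<eta>" "\<eta> < 1" using assms(4,5) by auto
  from assms(2) obtain i0 j0 where ij0: "i0 < n" "j0 < n" "M i0 j0 \<noteq> 0" by blast
  then have n: "n \<ge> 1" by simp
  define k where "k = d - 1"
  have k: "k \<ge> 1" "d = Suc k" using d by (auto simp: k_def)
  define K where "K = {..<n} \<times> {..<d}"
  have GK: "gaussian_matrix n d = GM K" unfolding gaussian_matrix_def K_def by simp
  interpret PK: prob_space "GM K" by (rule prob_space_PiM) (rule probNN)
  define F where "F = frob_norm n M"
  define X where "X = vec_norm d x"
  have F2: "F\<^sup>2 = (\<Sum>i<n. \<Sum>l<n. (M i l)\<^sup>2)"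
    unfolding F_def frob_norm_def by (simp add: sum_nonneg)
  have F2pos: "F\<^sup>2 > 0"
  proof -
    have "(M i0 j0)\<^sup>2 \<le> (\<Sum>l<n. (M i0 l)\<^sup>2)"
      using ij0 by (intro member_le_sum) auto
    also have "\<dots> \<le> (\<Sum>i<n. \<Sum>l<n. (M i l)\<^sup>2)"
      using ij0 by (intro member_le_sum sum_nonneg) auto
    finally show ?thesis using ij0 F2 by (smt (verit) zero_less_power2)
  qed
  have X2: "X\<^sup>2 = (\<Sum>j<d. (x j)\<^sup>2)"
    unfolding X_def vec_norm_def by (intro real_sqrt_pow2 sum_nonneg) auto
  have X0: "X \<ge> 0" unfolding X_def vec_norm_def by (intro real_sqrt_ge_zero sum_nonneg) auto
  have X2pos: "X\<^sup>2 > 0"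
  proof -
    from assms(3) obtain j1 where "j1 < d" "x j1 \<noteq> 0" by blast
    then have "(x j1)\<^sup>2 \<le> (\<Sum>j<d. (x j)\<^sup>2)" by (intro member_le_sum) auto
    then show ?thesis using \<open>x j1 \<noteq> 0\<close> X2 by (smt (verit) zero_less_power2)
  qed
  define \<theta> where "\<theta> = \<eta> powr (1 / real k)"
  have th0: "\<theta> > 0" using \<eta> by (simp add: \<theta>_def)
  have pw: "\<eta> powr (1 + 1 / real (d - 1)) = \<eta> * \<theta>"
    using \<eta> by (simp add: \<theta>_def k_def powr_add)
  define c1 where "c1 = sqrt (real k * pi / (8 * real n))"
  have c1sq: "c1\<^sup>2 = real k * pi / (8 * real n)" unfolding c1_def by simp
  define T where "T = F * X * c1 * (\<eta> * \<theta>)"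
  have F0: "F \<ge> 0" unfolding F_def frob_norm_def by (intro real_sqrt_ge_zero sum_nonneg) auto
  have T0: "T \<ge> 0" unfolding T_def c1_def using F0 X0 \<eta> th0 by (intro mult_nonneg_nonneg) auto
  define S where "S = (\<lambda>y. {A \<in> space (GM K). vec_norm d (AtMAx n d A M y) \<le> T})"
  have goalset: "{A \<in> space (gaussian_matrix n d).
        vec_norm d (AtMAx n d A M x)
          \<le> frob_norm n M * vec_norm d x * sqrt (real (d - 1) * pi / (8 * real n))
             * \<eta> powr (1 + 1 / real (d - 1))} = S x"
    unfolding S_def GK T_def F_def X_def c1_def pw k_def by simp
  have d1: "d \<ge> 1" using d by simp
  obtain x' where x'1: "\<forall>j. 0 < j \<and> j < d \<longrightarrow> x' j = 0" and x'2: "(\<Sum>j<d. (x' j)\<^sup>2) = (\<Sum>j<d. (x j)\<^sup>2)"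
    and x'3: "emeasure (GM ({..<n}\<times>{..<d})) {A \<in> space (GM ({..<n}\<times>{..<d})). vec_norm d (AtMAx n d A M x') \<le> T}
    = emeasure (GM ({..<n}\<times>{..<d})) {A \<in> space (GM ({..<n}\<times>{..<d})). vec_norm d (AtMAx n d A M x) \<le> T}"
    using app1[OF d1, where n=n and M=M and x=x and T=T] by (elim exE conjE)
  have x'S: "emeasure (GM K) (S x') = emeasure (GM K) (S x)" using x'3 unfolding S_def K_def .
  define rs where "rs = (\<lambda>i. \<Sum>l<n. (M i l)\<^sup>2)"
  obtain ist where ist: "ist < n" "\<forall>i<n. rs i \<le> rs ist"
  proof -
    have "Max (rs ` {..<n}) \<in> rs ` {..<n}" using n by (intro Max_in) (auto simp: lessThan_empty_iff)
    then obtain i where i: "i < n" "rs i = Max (rs ` {..<n})" by auto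
    have "rs j \<le> Max (rs ` {..<n})" if "j < n" for j using that by (intro Max_ge) auto
    then show ?thesis using that i by auto
  qed
  define R2 where "R2 = rs ist"
  have F2le: "F\<^sup>2 \<le> real n * R2"
  proof -
    have "F\<^sup>2 = (\<Sum>i<n. rs i)" unfolding F2 rs_def ..
    also have "\<dots> \<le> (\<Sum>i<n. R2)" unfolding R2_def using ist by (intro sum_mono) auto
    also have "\<dots> = real n * R2" by simp
    finally show ?thesis .
  qed
  have R2pos: "R2 > 0"
  proof (rule ccontr)
    assume "\<not> R2 > 0"
    then have "real n * R2 \<le> 0" by (simp add: mult_nonneg_nonpos)
    then show False using F2le F2pos by linarith
  qed
  define a where "a = \<eta> * sqrt (pi / 2) * sqrt R2"
  have apos: "a > 0" unfolding a_def using \<eta> R2pos by simp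
  have a2: "a\<^sup>2 = \<eta>\<^sup>2 * (pi / 2) * R2" unfolding a_def using R2pos by (simp add: power_mult_distrib)
  define s0 where "s0 = T\<^sup>2 / X\<^sup>2"
  define u where "u = (\<lambda>(A::nat\<times>nat\<Rightarrow>real) i. \<Sum>l<n. M i l * A (l, 0))"
  define E1 where "E1 = {A \<in> space (GM K). (lc n (M ist) A 0)\<^sup>2 \<le> a\<^sup>2}"
  define E2 where "E2 = {A \<in> space (GM K). a\<^sup>2 < (lc n (M ist) A 0)\<^sup>2 \<and> (\<Sum>kk\<in>{1..<d}. (lc n (u A) A kk)\<^sup>2) \<le> s0}"
  have x'0: "(x' 0)\<^sup>2 = X\<^sup>2"
  proof -
    have "(\<Sum>j<d. (x' j)\<^sup>2) = (\<Sum>j\<in>{..<d}. if j = 0 then (x' 0)\<^sup>2 else 0)"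
      using x'1 by (intro sum.cong) auto
    also have "\<dots> = (x' 0)\<^sup>2" using d by simp
    finally show ?thesis using x'2 X2 by simp
  qed
  have sub: "S x' \<subseteq> E1 \<union> E2"
  proof
    fix A assume "A \<in> S x'"
    then have Asp: "A \<in> space (GM K)" and AT: "vec_norm d (AtMAx n d A M x') \<le> T" unfolding S_def by auto
    have inner: "(\<Sum>j<d. A (l, j) * x' j) = A (l, 0) * x' 0" for l
    proof -
      have "(\<Sum>j<d. A (l, j) * x' j) = (\<Sum>j\<in>{..<d}. if j = 0 then A (l, 0) * x' 0 else 0)"
        using x'1 by (intro sum.cong) auto
      also have "\<dots> = A (l, 0) * x' 0" using d by simp
      finally show ?thesis .
    qed
    have at: "AtMAx n d A M x' kk = x' 0 * lc n (u A) A kk" for kk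
      unfolding AtMAx_def lc_def u_def inner
      by (simp add: sum_distrib_left sum_distrib_right mult_ac)
    let ?L = "\<lambda>kk. lc n (u A) A kk"
    have vn2: "(vec_norm d (AtMAx n d A M x'))\<^sup>2 = (\<Sum>kk<d. (AtMAx n d A M x' kk)\<^sup>2)"
      unfolding vec_norm_def by (intro real_sqrt_pow2 sum_nonneg) auto
    have vn0: "vec_norm d (AtMAx n d A M x') \<ge> 0" unfolding vec_norm_def by (intro real_sqrt_ge_zero sum_nonneg) auto
    have "(vec_norm d (AtMAx n d A M x'))\<^sup>2 \<le> T\<^sup>2" using AT vn0 by (intro power_mono) auto
    then have "(\<Sum>kk<d. (x' 0 * ?L kk)\<^sup>2) \<le> T\<^sup>2" unfolding vn2 at .
    then have le1: "X\<^sup>2 * (\<Sum>kk<d. (?L kk)\<^sup>2) \<le> T\<^sup>2"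
      by (simp add: power_mult_distrib sum_distrib_left x'0)
    have "(\<Sum>kk\<in>{1..<d}. (?L kk)\<^sup>2) \<le> (\<Sum>kk<d. (?L kk)\<^sup>2)"
      by (intro sum_mono2) auto
    then have "X\<^sup>2 * (\<Sum>kk\<in>{1..<d}. (?L kk)\<^sup>2) \<le> T\<^sup>2"
      using le1 X2pos by (meson mult_left_mono less_imp_le order_trans)
    then have "(\<Sum>kk\<in>{1..<d}. (?L kk)\<^sup>2) \<le> s0"
      unfolding s0_def using X2pos by (simp add: field_simps)
    then show "A \<in> E1 \<union> E2" unfolding E1_def E2_def using Asp by auto
  qed
  have bound1: "emeasure (GM K) E1 \<le> ennreal \<eta>"
  proof -
    have R2': "(\<Sum>i<n. (M ist i)\<^sup>2) = R2" unfolding R2_def rs_def ..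
    have "emeasure (GM K) E1 \<le> ennreal (2 * (a / sqrt (\<Sum>i<n. (M ist i)\<^sup>2)) / sqrt (2 * pi))"
      unfolding E1_def K_def using d R2pos apos
      by (intro E1_bound[OF n]) (auto simp: R2')
    also have "2 * (a / sqrt (\<Sum>i<n. (M ist i)\<^sup>2)) / sqrt (2 * pi) = \<eta>"
    proof -
      have s2: "sqrt (2 * pi) = 2 * sqrt (pi / 2)"
      proof -
        have "sqrt (2 * pi) = sqrt (2\<^sup>2 * (pi / 2))" by (simp add: power2_eq_square)
        also have "\<dots> = \<bar>2\<bar> * sqrt (pi / 2)" by (simp only: real_sqrt_mult real_sqrt_abs)
        finally show ?thesis by simp
      qed
      show ?thesis unfolding R2' a_def s2 using R2pos by (simp add: field_simps)
    qed
    finally show ?thesis .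
  qed
  have s1: "0 \<le> s0 / a\<^sup>2" "s0 / a\<^sup>2 \<le> real k * \<theta>\<^sup>2 / 4"
  proof -
    have npos: "real n > 0" using n by simp
    have T2: "T\<^sup>2 = F\<^sup>2 * X\<^sup>2 * (real k * pi / (8 * real n)) * \<eta>\<^sup>2 * \<theta>\<^sup>2"
      unfolding T_def by (simp add: power_mult_distrib c1sq)
    have eq: "s0 / a\<^sup>2 = (F\<^sup>2 / (real n * R2)) * (real k * \<theta>\<^sup>2 / 4)"
    proof -
      have Xne: "X \<noteq> 0" using X2pos by auto
      show ?thesis unfolding s0_def T2 a2 using Xne R2pos npos \<eta> pi_gt_zero by (simp add: field_simps power2_eq_square)
    qed
    have q: "F\<^sup>2 / (real n * R2) \<le> 1" using F2le npos R2pos by (simp add: field_simps)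
    have q0: "F\<^sup>2 / (real n * R2) \<ge> 0" using npos R2pos by simp
    show "0 \<le> s0 / a\<^sup>2" unfolding eq using q0 by (intro mult_nonneg_nonneg) auto
    show "s0 / a\<^sup>2 \<le> real k * \<theta>\<^sup>2 / 4" unfolding eq using q q0
      by (metis mult_left_le_one_le zero_le_divide_iff zero_le_numeral zero_le_power2 of_nat_0_le_iff mult_nonneg_nonneg mult.commute)
  qed
  define t where "t = 2 / \<theta>\<^sup>2 - 1/2"
  have tpos: "t > 0" and tb: "exp (t * (s0 / a\<^sup>2)) * (1 / sqrt (1 + 2 * t)) ^ k \<le> \<eta>"
    using numeric[OF k(1) \<eta> \<theta>_def s1] unfolding t_def by auto
  have bound2: "emeasure (GM K) E2 \<le> ennreal \<eta>"
  proof -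
    interpret P: product_sigma_finite "\<lambda>_::nat\<times>nat. NN" by (rule PS)
    define C0 where "C0 = {..<n} \<times> {0::nat}"
    define C1 where "C1 = {..<n} \<times> {1..<d}"
    have KC: "K = C0 \<union> C1" unfolding K_def C0_def C1_def using d by auto
    have disj: "C0 \<inter> C1 = {}" "finite C0" "finite C1" unfolding C0_def C1_def by auto
    have E2m: "E2 \<in> sets (GM K)" unfolding E2_def lc_def u_def by measurable
    have ind_m: "indicator E2 \<in> borel_measurable (GM (C0 \<union> C1))" using E2m unfolding KC by simp
    interpret P0: prob_space "GM C0" by (rule prob_space_PiM) (rule probNN)
    have "emeasure (GM K) E2 = (\<integral>\<^sup>+A. indicator E2 A \<partial>GM (C0 \<union> C1))" using E2m unfolding KC by simp
    also have "\<dots> = (\<integral>\<^sup>+xx. (\<integral>\<^sup>+y. indicator E2 (merge C0 C1 (xx, y)) \<partial>GM C1) \<partial>GM C0)"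
      by (rule P.product_nn_integral_fold[OF disj ind_m])
    also have "\<dots> \<le> (\<integral>\<^sup>+xx. ennreal \<eta> \<partial>GM C0)"
    proof (rule nn_integral_mono)
      fix xx assume xx: "xx \<in> space (GM C0)"
      define ux where "ux i = (\<Sum>l<n. M i l * xx (l, 0))" for i
      let ?Y = "{y \<in> space (GM C1). (\<Sum>kk\<in>{1..<d}. (lc n ux y kk)\<^sup>2) \<le> s0}"
      have mg: "merge C0 C1 (xx, y) \<in> space (GM K)" if "y \<in> space (GM C1)" for y
        using xx that unfolding KC by (auto simp: space_PiM PiE_def extensional_def merge_def)
      have m0: "merge C0 C1 (xx, y) (l, 0) = xx (l, 0)" if "l < n" for l y
        using that unfolding C0_def C1_def merge_def by auto
      have m1: "merge C0 C1 (xx, y) (i, kk) = y (i, kk)" if "i < n" "kk \<in> {1..<d}" for i kk y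
        using that unfolding C0_def C1_def merge_def by auto
      have uZ: "u (merge C0 C1 (xx, y)) = ux" for y
        unfolding u_def ux_def by (auto simp: m0 intro!: sum.cong)
      have lc0: "lc n (M ist) (merge C0 C1 (xx, y)) 0 = ux ist" for y
        unfolding lc_def ux_def by (auto simp: m0 mult.commute intro!: sum.cong)
      have lck: "(\<Sum>kk\<in>{1..<d}. (lc n (u (merge C0 C1 (xx, y))) (merge C0 C1 (xx, y)) kk)\<^sup>2)
          = (\<Sum>kk\<in>{1..<d}. (lc n ux y kk)\<^sup>2)" for y
        unfolding uZ lc_def by (intro sum.cong refl) (auto simp: m1 intro!: sum.cong)
      have ind: "indicator E2 (merge C0 C1 (xx, y)) = (if a\<^sup>2 < (ux ist)\<^sup>2 then indicator ?Y y else 0)"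
        if "y \<in> space (GM C1)" for y
      proof -
        have "(merge C0 C1 (xx, y) \<in> E2) = (a\<^sup>2 < (lc n (M ist) (merge C0 C1 (xx, y)) 0)\<^sup>2 \<and>
            (\<Sum>kk\<in>{1..<d}. (lc n (u (merge C0 C1 (xx, y))) (merge C0 C1 (xx, y)) kk)\<^sup>2) \<le> s0)"
          unfolding E2_def using mg[OF that] by blast
        also have "\<dots> = (a\<^sup>2 < (ux ist)\<^sup>2 \<and> y \<in> ?Y)" unfolding lc0 lck using that by blast
        finally have E: "(merge C0 C1 (xx, y) \<in> E2) = (a\<^sup>2 < (ux ist)\<^sup>2 \<and> y \<in> ?Y)" .
        show ?thesis unfolding indicator_def E by auto
      qed
      show "(\<integral>\<^sup>+y. indicator E2 (merge C0 C1 (xx, y)) \<partial>GM C1) \<le> ennreal \<eta>"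
      proof (cases "a\<^sup>2 < (ux ist)\<^sup>2")
        case False
        have "(\<integral>\<^sup>+y. indicator E2 (merge C0 C1 (xx, y)) \<partial>GM C1) = (\<integral>\<^sup>+y. 0 \<partial>GM C1)"
          by (rule nn_integral_cong) (simp add: ind False)
        then show ?thesis by simp
      next
        case True
        have Ym: "?Y \<in> sets (GM C1)" unfolding lc_def by measurable
        have "(\<integral>\<^sup>+y. indicator E2 (merge C0 C1 (xx, y)) \<partial>GM C1) = (\<integral>\<^sup>+y. indicator ?Y y \<partial>GM C1)"
          by (rule nn_integral_cong) (simp add: ind True)
        also have "\<dots> = emeasure (GM C1) ?Y" using Ym by simp
        also have "\<dots> \<le> ennreal (exp (t * (s0 / a\<^sup>2)) * (1 / sqrt (1 + 2 * t)) ^ card {1..<d})"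
          unfolding C1_def
        proof (rule E2_inner[OF n])
          have "(ux ist)\<^sup>2 \<le> (\<Sum>i<n. (ux i)\<^sup>2)" using ist by (intro member_le_sum) auto
          then show "a\<^sup>2 \<le> (\<Sum>i<n. (ux i)\<^sup>2)" using True by simp
          show "0 \<le> s0" unfolding s0_def by simp
        qed (use apos tpos in auto)
        also have "card {1..<d} = k" unfolding k_def by simp
        also have "ennreal (exp (t * (s0 / a\<^sup>2)) * (1 / sqrt (1 + 2 * t)) ^ k) \<le> ennreal \<eta>"
          using tb by (rule ennreal_leI)
        finally show ?thesis .
      qed
    qed
    also have "\<dots> = ennreal \<eta>" by (simp add: P0.emeasure_space_1)
    finally show ?thesis .
  qed
  have E1m: "E1 \<in> sets (GM K)" unfolding E1_def lc_def by measurable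
  have E2m: "E2 \<in> sets (GM K)" unfolding E2_def lc_def u_def by measurable
  have "emeasure (GM K) (S x) = emeasure (GM K) (S x')" using x'S by simp
  also have "\<dots> \<le> emeasure (GM K) (E1 \<union> E2)" using sub E1m E2m by (intro emeasure_mono) auto
  also have "\<dots> \<le> emeasure (GM K) E1 + emeasure (GM K) E2" using E1m E2m by (rule emeasure_subadditive)
  also have "\<dots> \<le> ennreal \<eta> + ennreal \<eta>" using bound1 bound2 by (rule add_mono)
  also have "\<dots> = ennreal (2 * \<eta>)" using \<eta> by (simp add: ennreal_plus[symmetric])
  finally have em: "emeasure (GM K) (S x) \<le> ennreal (2 * \<eta>)" .
  have "measure (GM K) (S x) \<le> 2 * \<eta>"
    using em \<eta> by (simp add: PK.emeasure_eq_measure)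
  then have "measure (gaussian_matrix n d) (S x) \<le> 2 * \<eta>" unfolding GK .
  then show ?thesis unfolding goalset .
qed

end
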